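(* Suppose Assumption A1 and Assumption A2(ii) hold, let $K$ be $(\kappa,\gamma)$-strongly stable, $H=\lceil2\gamma^{-1}\log T\rceil$, and let $\{M_t\}_{t=-H-1}^0$ be arbitrary with $M_t\in\mathcal M$. Let $\{M_t\}_{t=1}^{T-1}$ be given by $M_{t+1}=\Pi_{\mathcal M}(M_t-\eta\nabla_Mf_t(M_t))$ with $\eta=(\sqrt T(\log T)^3)^{-1}$, where $\Pi_{\mathcal M}$ is the Frobenius projection onto $\mathcal M$. Let $D:=\frac{4\kappa_B\kappa^3\sqrt n}{\gamma}$ and $\sigma_w^{[1,4]}:=\max\{\sigma_w,\sigma_w^4\}$. Then for any $C>0$, $T\ge3$ and $M\in\mathcal M$, with probability at least $1-\frac{65640\sigma_w^{[1,4]}n^2G_c^2\kappa_B^6\kappa^{18}}{C\gamma^8(1-\gamma)^4}$, $$\sum_{t=0}^{T-1}F_t(M_{t-1-H},\dots,M_t)-\sum_{t=0}^{T-1}f_t(M)\le\Big(\frac{2\sqrt3G_cC^3}{\sqrt\gamma}+\frac{D^2}2\Big)\sqrt T(\log T)^3+\frac C2\sqrt T\log T.$$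
   Context: Linear system $x_{t+1}=Ax_t+Bu_t+w_t$; $n:=\max\{n_x,n_u\}$, $\kappa_B:=\max\{\|B\|,1\}$; $w_s:=0$ for $s<0$. $(\kappa,\gamma)$-strong stability: complex $P,Q$ with $A-BK=QPQ^{-1}$, $\|P\|\le1-\gamma$, $\|K\|,\|Q\|,\|Q^{-1}\|\le\kappa$. $A_K:=A-BK$. Assumption A1: $c_t$ convex, differentiable, $\|\nabla_xc_t(x,u)\|\le G_c\|x\|$, $\|\nabla_uc_t(x,u)\|\le G_c\|u\|$, $G_c\ge1$. Assumption A2(ii): $\mathbb E\|w_t\|^4\le\sigma_w^4$ (which implies $\mathbb E\|w_t\|\le\sigma_w$). For $M=\{M^{[0]},\dots,M^{[H-1]}\}$, $\|M\|_F:=\|[M^{[0]},\dots,M^{[H-1]}]\|_F$; $\mathcal M:=\{M:\|M^{[i]}\|\le2\kappa_B\kappa^3(1-\gamma)^i\}$. Surrogate: $\Psi^{K,h}_{t,i}(M_{t-h:t}):=A_K^i\mathbf 1_{i\le h}+\sum_{j=0}^hA_K^jBM_{t-j}^{[i-j-1]}\mathbf 1_{i-j\in[1,H]}$; $y_t:=\sum_{i=0}^{2H}\Psi^{K,H}_{t-1,i}(M_{t-1-H:t-1})w_{t-1-i}$; $v_t:=-Ky_t+\sum_{i=1}^HM_t^{[i-1]}w_{t-i}$; $F_t(M_{t-1-H:t}):=c_t(y_t,v_t)$; $f_t(M):=F_t(M,\dots,M)$. *)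

theory Defs
  imports "HOL-Analysis.Analysis" "HOL-Probability.Probability"
begin

definition opnorm :: "'a::{real_normed_vector,semiring_1} ^'n::finite ^'m::finite \<Rightarrow> real" where
  "opnorm X = onorm (\<lambda>v. X *v v)"

primrec mpow :: "real ^'n::finite ^'n \<Rightarrow> nat \<Rightarrow> real ^'n ^'n" where
  "mpow X 0 = mat 1"
| "mpow X (Suc k) = X ** mpow X k"

definition cmat :: "real ^'n::finite ^'m::finite \<Rightarrow> complex ^'n ^'m" where
  "cmat X = (\<chi> i j. complex_of_real (X $ i $ j))"

definition strongly_stable ::
  "real \<Rightarrow> real \<Rightarrow> real ^'nx::finite ^'nx \<Rightarrow> real ^'nu::finite ^'nx \<Rightarrow> real ^'nx ^'nu \<Rightarrow> bool" where
  "strongly_stable \<kappa> \<gamma> A B K \<longleftrightarrow>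
     (\<exists>P Q Qi :: complex ^'nx ^'nx.
        Q ** Qi = mat 1 \<and> Qi ** Q = mat 1 \<and>
        cmat (A - B ** K) = Q ** P ** Qi \<and>
        opnorm P \<le> 1 - \<gamma> \<and> opnorm K \<le> \<kappa> \<and> opnorm Q \<le> \<kappa> \<and> opnorm Qi \<le> \<kappa>)"

definition kappaB :: "real ^'nu::finite ^'nx::finite \<Rightarrow> real" where
  "kappaB B = max (opnorm B) 1"

definition cost_assm :: "real \<Rightarrow> (nat \<Rightarrow> real ^'nx::finite \<Rightarrow> real ^'nu::finite \<Rightarrow> real) \<Rightarrow> bool" where
  "cost_assm Gc c \<longleftrightarrow> Gc \<ge> 1 \<and>
     (\<forall>t. convex_on UNIV (\<lambda>(x,u). c t x u) \<and>
       (\<forall>x u. \<exists>gx gu. ((\<lambda>(x',u'). c t x' u') has_derivative (\<lambda>(dx,du). gx \<bullet> dx + gu \<bullet> du)) (at (x,u))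
              \<and> norm gx \<le> Gc * norm x \<and> norm gu \<le> Gc * norm u))"

(* a policy M = {M^[0],...,M^[H-1]} is a function nat => matrix (entries >= H are irrelevant / zero) *)
type_synonym ('nx,'nu) pol = "nat \<Rightarrow> real ^'nx ^'nu"

definition Mset :: "nat \<Rightarrow> real \<Rightarrow> real \<Rightarrow> real \<Rightarrow> ('nx::finite,'nu::finite) pol set" where
  "Mset H kB \<kappa> \<gamma> = {M. (\<forall>i<H. opnorm (M i) \<le> 2 * kB * \<kappa>^3 * (1 - \<gamma>)^i) \<and> (\<forall>i\<ge>H. M i = 0)}"

definition frob :: "nat \<Rightarrow> ('nx::finite,'nu::finite) pol \<Rightarrow> real" where
  "frob H M = sqrt (\<Sum>i<H. \<Sum>r\<in>UNIV. \<Sum>s\<in>UNIV. (M i $ r $ s)^2)"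

definition proj :: "nat \<Rightarrow> ('nx::finite,'nu::finite) pol set \<Rightarrow> ('nx,'nu) pol \<Rightarrow> ('nx,'nu) pol" where
  "proj H S X = (SOME P. P \<in> S \<and> (\<forall>Q\<in>S. frob H (\<lambda>i. P i - X i) \<le> frob H (\<lambda>i. Q i - X i)))"

definition wz :: "(nat \<Rightarrow> 'w \<Rightarrow> real ^'nx) \<Rightarrow> 'w \<Rightarrow> int \<Rightarrow> real ^'nx" where
  "wz w \<omega> s = (if s < 0 then 0 else w (nat s) \<omega>)"

(* surrogate transfer matrix Psi^{K,h}_{t,i}(M_{t-h:t}); Ms s = M_s *)
definition Psi :: "real ^'nx::finite ^'nx \<Rightarrow> real ^'nu::finite ^'nx \<Rightarrow> real ^'nx ^'nu \<Rightarrow> nat \<Rightarrow> nat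
                   \<Rightarrow> (int \<Rightarrow> ('nx,'nu) pol) \<Rightarrow> int \<Rightarrow> nat \<Rightarrow> real ^'nx ^'nx" where
  "Psi A B K H h Ms t i =
     (if i \<le> h then mpow (A - B ** K) i else 0) +
     (\<Sum>j\<in>{0..h}. if 1 \<le> i - j \<and> i - j \<le> H
                   then mpow (A - B ** K) j ** B ** (Ms (t - int j)) (i - j - 1) else 0)"

definition ysur where
  "ysur A B K H w Ms t \<omega> =
     (\<Sum>i\<in>{0..2*H}. Psi A B K H H Ms (t - 1) i *v wz w \<omega> (t - 1 - int i))"

definition vsur where
  "vsur A B K H w Ms t \<omega> =
     - (K *v ysur A B K H w Ms t \<omega>) + (\<Sum>i\<in>{1..H}. (Ms t) (i - 1) *v wz w \<omega> (t - int i))"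

definition Fsur where
  "Fsur A B K H c w Ms t \<omega> = c t (ysur A B K H w Ms (int t) \<omega>) (vsur A B K H w Ms (int t) \<omega>)"

definition fsur where
  "fsur A B K H c w t M \<omega> = Fsur A B K H c w (\<lambda>_. M) t \<omega>"

definition Emat :: "'nu::finite \<Rightarrow> 'nx::finite \<Rightarrow> real ^'nx ^'nu" where
  "Emat r s = (\<chi> a b. if a = r \<and> b = s then 1 else 0)"

definition gradM :: "nat \<Rightarrow> (('nx::finite,'nu::finite) pol \<Rightarrow> real) \<Rightarrow> ('nx,'nu) pol \<Rightarrow> ('nx,'nu) pol" where
  "gradM H g M = (\<lambda>i. if i < H then
       (\<chi> r s. deriv (\<lambda>e. g (\<lambda>k. if k = i then M k + e *\<^sub>R Emat r s else M k)) 0) else 0)"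

primrec ogd where
  "ogd A B K H c w \<eta> S M0 0 \<omega> = M0"
| "ogd A B K H c w \<eta> S M0 (Suc t) \<omega> =
     (let Mt = ogd A B K H c w \<eta> S M0 t \<omega>;
          G = gradM H (\<lambda>M. fsur A B K H c w t M \<omega>) Mt
      in proj H S (\<lambda>i. Mt i - \<eta> *\<^sub>R G i))"

definition Mfull where
  "Mfull A B K H c w \<eta> S Minit \<omega> s =
     (if s \<le> 0 then Minit s else ogd A B K H c w \<eta> S (Minit 0) (nat s) \<omega>)"

end

theory Submission
  imports Defs
begin

lemma opnorm_nonneg: "0 \<le> opnorm (X :: 'a::{euclidean_space,real_algebra_1}^'n::finite^'m::finite)"
  unfolding opnorm_def by (rule onorm_pos_le) simp

lemma opnorm_mult_vec: "norm (X *v v) \<le> opnorm (X :: 'a::{euclidean_space,real_algebra_1}^'n::finite^'m::finite) * norm v"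
  unfolding opnorm_def by (rule onorm) simp

lemma opnorm_le:
  assumes "0 \<le> b" "\<And>v. norm (X *v v) \<le> b * norm v"
  shows "opnorm (X :: 'a::{euclidean_space,real_algebra_1}^'n::finite^'m::finite) \<le> b"
  unfolding opnorm_def by (rule onorm_bound) (use assms in auto)

lemma opnorm_mult: "opnorm ((X :: 'a::{euclidean_space,real_algebra_1}^'n::finite^'m::finite) ** (Y :: 'a^'k::finite^'n)) \<le> opnorm X * opnorm Y"
proof (rule opnorm_le)
  show "0 \<le> opnorm X * opnorm Y" by (simp add: opnorm_nonneg)
  fix v
  have "norm ((X ** Y) *v v) = norm (X *v (Y *v v))" by (simp add: matrix_vector_mul_assoc)
  also have "\<dots> \<le> opnorm X * norm (Y *v v)" by (rule opnorm_mult_vec)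
  also have "\<dots> \<le> opnorm X * (opnorm Y * norm v)"
    by (rule mult_left_mono[OF opnorm_mult_vec opnorm_nonneg])
  finally show "norm ((X ** Y) *v v) \<le> opnorm X * opnorm Y * norm v" by (simp add: mult.assoc)
qed

lemma opnorm_add: "opnorm ((X :: 'a::{euclidean_space,real_algebra_1}^'n::finite^'m::finite) + Y) \<le> opnorm X + opnorm Y"
proof (rule opnorm_le)
  show "0 \<le> opnorm X + opnorm Y" by (simp add: opnorm_nonneg)
  fix v
  have "norm ((X + Y) *v v) \<le> norm (X *v v) + norm (Y *v v)"
    by (simp add: matrix_vector_mult_add_rdistrib norm_triangle_ineq)
  also have "\<dots> \<le> opnorm X * norm v + opnorm Y * norm v"
    by (intro add_mono opnorm_mult_vec)
  finally show "norm ((X + Y) *v v) \<le> (opnorm X + opnorm Y) * norm v" by (simp add: algebra_simps)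
qed

lemma opnorm_scale: "opnorm (c *\<^sub>R (X :: 'a::{euclidean_space,real_algebra_1}^'n::finite^'m::finite)) \<le> \<bar>c\<bar> * opnorm X"
proof (rule opnorm_le)
  show "0 \<le> \<bar>c\<bar> * opnorm X" by (simp add: opnorm_nonneg)
  fix v
  have "(c *\<^sub>R X) *v v = c *\<^sub>R (X *v v)"
    by (simp add: vec_eq_iff matrix_vector_mult_def scaleR_sum_right)
  then have "norm ((c *\<^sub>R X) *v v) = \<bar>c\<bar> * norm (X *v v)" by simp
  also have "\<dots> \<le> \<bar>c\<bar> * (opnorm X * norm v)" by (intro mult_left_mono opnorm_mult_vec) auto
  finally show "norm ((c *\<^sub>R X) *v v) \<le> \<bar>c\<bar> * opnorm X * norm v" by (simp add: mult.assoc)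
qed

lemma opnorm_zero: "opnorm (0 :: 'a::{euclidean_space,real_algebra_1}^'n::finite^'m::finite) = 0"
  using opnorm_le[of 0 "0 :: 'a^'n^'m"] opnorm_nonneg[of "0 :: 'a^'n^'m"] by simp

lemma opnorm_id: "opnorm (mat 1 :: 'a::{euclidean_space,real_algebra_1}^'n::finite^'n) = 1"
proof -
  have "(*v) (mat 1 :: 'a^'n^'n) = (\<lambda>x. x)" by (rule ext) simp
  then show ?thesis unfolding opnorm_def by (simp add: onorm_id)
qed

lemma opnorm_minus: "opnorm (X - Y) \<le> opnorm (X :: 'a::{euclidean_space,real_algebra_1}^'n::finite^'m::finite) + opnorm Y"
proof -
  have "X - Y = X + (-1) *\<^sub>R Y" by simp
  then have "opnorm (X - Y) \<le> opnorm X + opnorm ((-1) *\<^sub>R Y)" using opnorm_add by metis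
  also have "opnorm ((-1) *\<^sub>R Y) \<le> opnorm Y" using opnorm_scale[of "-1" Y] by simp
  finally show ?thesis by simp
qed

lemma opnorm_uminus: "opnorm (- X) \<le> opnorm (X :: 'a::{euclidean_space,real_algebra_1}^'n::finite^'m::finite)"
  using opnorm_scale[of "-1" X] by simp

lemma opnorm_sum: "finite S \<Longrightarrow> opnorm (\<Sum>i\<in>S. (f i :: 'a::{euclidean_space,real_algebra_1}^'n::finite^'m::finite)) \<le> (\<Sum>i\<in>S. opnorm (f i))"
proof (induction S rule: finite_induct)
  case empty then show ?case by (simp add: opnorm_zero)
next
  case (insert x F)
  then show ?case using opnorm_add[of "f x" "sum f F"] by simp
qed

lemma norm_sum_mv:
  "finite S \<Longrightarrow> norm (\<Sum>i\<in>S. (P i :: real^'n::finite^'m::finite) *v v i) \<le> (\<Sum>i\<in>S. opnorm (P i) * norm (v i))"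
  by (rule order.trans[OF norm_sum sum_mono]) (rule opnorm_mult_vec)

lemma norm_mv_le_norm: "norm (X *v v) \<le> norm (X :: real^'n::finite^'m::finite) * norm v"
proof -
  have e1: "(norm (X *v v))^2 = (\<Sum>i\<in>UNIV. (X$i \<bullet> v)^2)"
    unfolding power2_norm_eq_inner by (simp add: inner_vec_def matrix_vector_mult_def power2_eq_square)
  have e2: "(norm X)^2 = (\<Sum>i\<in>UNIV. (norm (X$i))^2)"
    unfolding power2_norm_eq_inner by (simp add: inner_vec_def)
  have "(\<Sum>i\<in>UNIV. (X$i \<bullet> v)^2) \<le> (\<Sum>i\<in>UNIV. (norm (X$i))^2 * (norm v)^2)"
  proof (rule sum_mono)
    fix i
    have "\<bar>X$i \<bullet> v\<bar> \<le> norm (X$i) * norm v" by (rule Cauchy_Schwarz_ineq2)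
    then have "\<bar>X$i \<bullet> v\<bar>^2 \<le> (norm (X$i) * norm v)^2" by (rule power_mono) simp
    then show "(X$i \<bullet> v)^2 \<le> (norm (X$i))^2 * (norm v)^2" by (simp add: power_mult_distrib)
  qed
  also have "\<dots> = (norm X * norm v)^2" by (simp add: e2 power_mult_distrib sum_distrib_right)
  finally have "(norm (X *v v))^2 \<le> (norm X * norm v)^2" using e1 by simp
  then show ?thesis by (rule power2_le_imp_le) simp
qed

lemma opnorm_le_norm: "opnorm (X :: real^'n::finite^'m::finite) \<le> norm X"
  by (rule opnorm_le) (auto simp: norm_mv_le_norm)


primrec cpow :: "complex ^'n::finite ^'n \<Rightarrow> nat \<Rightarrow> complex ^'n ^'n" where
  "cpow X 0 = mat 1"
| "cpow X (Suc k) = X ** cpow X k"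

definition cvec :: "real^'n::finite \<Rightarrow> complex^'n" where
  "cvec v = (\<chi> i. complex_of_real (v$i))"

lemma cmat_mult: "cmat ((X :: real^'n::finite^'m::finite) ** (Y :: real^'k::finite^'n)) = cmat X ** cmat Y"
  by (simp add: cmat_def matrix_matrix_mult_def vec_eq_iff)

lemma cmat_one: "cmat (mat 1 :: real^'n::finite^'n) = mat 1"
  by (simp add: cmat_def mat_def vec_eq_iff)

lemma cmat_mpow: "cmat (mpow X k) = cpow (cmat X) k"
  by (induction k) (simp_all add: cmat_one cmat_mult)

lemma norm_cvec: "norm (cvec v) = norm v"
  by (simp add: cvec_def norm_vec_def)

lemma cmat_mv: "cmat X *v cvec v = cvec (X *v v)"
  by (simp add: cmat_def cvec_def matrix_vector_mult_def vec_eq_iff)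

lemma opnorm_le_cmat: "opnorm (X :: real^'n::finite^'m::finite) \<le> opnorm (cmat X)"
proof (rule opnorm_le)
  show "0 \<le> opnorm (cmat X)" by (rule opnorm_nonneg)
  fix v
  have "norm (X *v v) = norm (cmat X *v cvec v)" by (simp add: cmat_mv norm_cvec)
  also have "\<dots> \<le> opnorm (cmat X) * norm (cvec v)" by (rule opnorm_mult_vec)
  finally show "norm (X *v v) \<le> opnorm (cmat X) * norm v" by (simp add: norm_cvec)
qed

lemma cpow_similar:
  assumes "Q ** Qi = mat 1" "Qi ** Q = mat 1"
  shows "cpow (Q ** P ** Qi) k = Q ** cpow P k ** Qi"
proof (induction k)
  case 0 then show ?case using assms by simp
next
  case (Suc k)
  have "cpow (Q ** P ** Qi) (Suc k) = Q ** P ** Qi ** (Q ** cpow P k ** Qi)" using Suc by simp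
  also have "\<dots> = Q ** P ** (Qi ** Q) ** cpow P k ** Qi" by (simp add: matrix_mul_assoc)
  also have "\<dots> = Q ** cpow P (Suc k) ** Qi" using assms by (simp add: matrix_mul_assoc)
  finally show ?case .
qed

lemma opnorm_cpow: "opnorm (cpow P k) \<le> opnorm P ^ k"
proof (induction k)
  case 0 then show ?case by (simp add: opnorm_id)
next
  case (Suc k)
  have "opnorm (cpow P (Suc k)) \<le> opnorm P * opnorm (cpow P k)" by (simp add: opnorm_mult)
  also have "\<dots> \<le> opnorm P * opnorm P ^ k" by (intro mult_left_mono Suc opnorm_nonneg)
  finally show ?case by simp
qed

lemma stab_bounds:
  assumes "strongly_stable \<kappa> \<gamma> (A :: real ^'nx::finite ^'nx) (B :: real ^'nu::finite ^'nx) K" "\<gamma> < 1"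
  shows "1 \<le> \<kappa>" "opnorm K \<le> \<kappa>"
    "\<And>j. opnorm (mpow (A - B ** K) j) \<le> \<kappa>^2 * (1 - \<gamma>)^j"
proof -
  obtain P Q Qi :: "complex ^'nx ^'nx" where h: "Q ** Qi = mat 1" "Qi ** Q = mat 1"
    "cmat (A - B ** K) = Q ** P ** Qi" "opnorm P \<le> 1 - \<gamma>" "opnorm K \<le> \<kappa>" "opnorm Q \<le> \<kappa>" "opnorm Qi \<le> \<kappa>"
    using assms(1) unfolding strongly_stable_def by blast
  show "opnorm K \<le> \<kappa>" by (rule h)
  have k0: "0 \<le> \<kappa>" using h(6) opnorm_nonneg[of Q] by linarith
  have "1 = opnorm (Q ** Qi)" using h(1) by (simp add: opnorm_id)
  also have "\<dots> \<le> opnorm Q * opnorm Qi" by (rule opnorm_mult)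
  also have "\<dots> \<le> \<kappa> * \<kappa>" by (intro mult_mono h opnorm_nonneg k0)
  finally have "1 \<le> \<kappa> * \<kappa>" .
  then show "1 \<le> \<kappa>"
  proof (rule contrapos_pp)
    assume "\<not> 1 \<le> \<kappa>"
    then have "\<kappa> * \<kappa> \<le> \<kappa> * 1" by (intro mult_left_mono) (use k0 in auto)
    then show "\<not> 1 \<le> \<kappa> * \<kappa>" using \<open>\<not> 1 \<le> \<kappa>\<close> by linarith
  qed
  fix j
  have "opnorm (mpow (A - B ** K) j) \<le> opnorm (cmat (mpow (A - B ** K) j))" by (rule opnorm_le_cmat)
  also have "cmat (mpow (A - B ** K) j) = Q ** cpow P j ** Qi"
    by (simp add: cmat_mpow h(3) cpow_similar[OF h(1,2)])
  also have "opnorm (Q ** cpow P j ** Qi) \<le> opnorm (Q ** cpow P j) * opnorm Qi" by (rule opnorm_mult)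
  also have "\<dots> \<le> (opnorm Q * opnorm (cpow P j)) * opnorm Qi"
    by (intro mult_right_mono opnorm_mult opnorm_nonneg)
  also have "\<dots> \<le> (\<kappa> * (1 - \<gamma>)^j) * \<kappa>"
  proof (intro mult_mono h k0 opnorm_nonneg mult_nonneg_nonneg)
    have "opnorm (cpow P j) \<le> opnorm P ^ j" by (rule opnorm_cpow)
    also have "\<dots> \<le> (1 - \<gamma>)^j" by (intro power_mono h opnorm_nonneg)
    finally show "opnorm (cpow P j) \<le> (1 - \<gamma>)^j" .
  qed (use assms(2) in auto)
  finally show "opnorm (mpow (A - B ** K) j) \<le> \<kappa>^2 * (1 - \<gamma>)^j" by (simp add: power2_eq_square algebra_simps)
qed

lemma norm_le_sqrt_opnorm: "norm (X :: real^'n::finite^'m::finite) \<le> sqrt (real CARD('n)) * opnorm X"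
proof -
  have "(norm X)^2 = (\<Sum>r\<in>UNIV. \<Sum>s\<in>UNIV. (X$r$s)^2)"
    unfolding power2_norm_eq_inner by (simp add: inner_vec_def power2_eq_square)
  also have "\<dots> = (\<Sum>s\<in>UNIV. \<Sum>r\<in>UNIV. (X$r$s)^2)" by (rule sum.swap)
  also have "\<dots> = (\<Sum>s\<in>UNIV. (norm (column s X))^2)"
    unfolding power2_norm_eq_inner by (simp add: inner_vec_def power2_eq_square column_def)
  also have "\<dots> \<le> (\<Sum>s\<in>(UNIV::'n set). (opnorm X)^2)"
    by (intro sum_mono power_mono) (auto simp: opnorm_def norm_column_le_onorm)
  also have "\<dots> = (sqrt (real CARD('n)) * opnorm X)^2" by (simp add: power_mult_distrib)
  finally show ?thesis
    by (rule power2_le_imp_le) (simp add: opnorm_nonneg)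
qed


definition linp :: "nat \<Rightarrow> (('nx::finite,'nu::finite) pol \<Rightarrow> 'v::real_vector) \<Rightarrow> bool" where
  "linp H L \<longleftrightarrow> (\<forall>X Y. L (\<lambda>k. X k + Y k) = L X + L Y) \<and> (\<forall>a X. L (\<lambda>k. a *\<^sub>R X k) = a *\<^sub>R L X)
      \<and> (\<forall>X Y. (\<forall>k<H. X k = Y k) \<longrightarrow> L X = L Y)"

lemma linpI:
  assumes "\<And>X Y. L (\<lambda>k. X k + Y k) = L X + L Y" "\<And>a X. L (\<lambda>k. a *\<^sub>R X k) = a *\<^sub>R L X"
    "\<And>X Y. (\<And>k. k<H \<Longrightarrow> X k = Y k) \<Longrightarrow> L X = L Y"
  shows "linp H L"
  using assms unfolding linp_def by blast

lemma linp_add: "linp H L \<Longrightarrow> L (\<lambda>k. X k + Y k) = L X + L Y"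
  unfolding linp_def by blast
lemma linp_scale: "linp H L \<Longrightarrow> L (\<lambda>k. a *\<^sub>R X k) = a *\<^sub>R L X"
  unfolding linp_def by blast
lemma linp_loc: "linp H L \<Longrightarrow> (\<And>k. k < H \<Longrightarrow> X k = Y k) \<Longrightarrow> L X = L Y"
  unfolding linp_def by blast

lemma linp_zero: assumes "linp H L" shows "L (\<lambda>k. 0) = 0"
proof -
  have "L (\<lambda>k. 0 *\<^sub>R (\<lambda>_. 0) k) = 0 *\<^sub>R L (\<lambda>_. 0)" by (rule linp_scale[OF assms])
  then show ?thesis by simp
qed

lemma linp_sum:
  assumes "linp H L" "finite F"
  shows "L (\<lambda>k. \<Sum>x\<in>F. f x k) = (\<Sum>x\<in>F. L (f x))"
  using assms(2)
proof (induction F rule: finite_induct)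
  case empty then show ?case using linp_zero[OF assms(1)] by simp
next
  case (insert x F)
  have "(\<lambda>k. \<Sum>x\<in>insert x F. f x k) = (\<lambda>k. f x k + (\<Sum>x\<in>F. f x k))"
    using insert.hyps by (simp add: fun_eq_iff)
  then have "L (\<lambda>k. \<Sum>x\<in>insert x F. f x k) = L (f x) + L (\<lambda>k. \<Sum>x\<in>F. f x k)"
    using linp_add[OF assms(1), of "f x" "\<lambda>k. \<Sum>x\<in>F. f x k"] by simp
  then show ?case using insert by simp
qed

lemma linp_diff: assumes "linp H L" shows "L (\<lambda>k. X k - Y k) = L X - L Y"
proof -
  have "L (\<lambda>k. X k + (\<lambda>k. (-1) *\<^sub>R Y k) k) = L X + L (\<lambda>k. (-1) *\<^sub>R Y k)"
    by (rule linp_add[OF assms])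
  also have "L (\<lambda>k. (-1) *\<^sub>R Y k) = (-1) *\<^sub>R L Y" by (rule linp_scale[OF assms])
  finally show ?thesis by simp
qed

lemma Emat_decomp: "(\<Sum>r\<in>UNIV. \<Sum>s\<in>UNIV. (X $ r $ s) *\<^sub>R Emat r s) = X"
proof -
  have "(\<Sum>r\<in>UNIV. \<Sum>s\<in>UNIV. (X $ r $ s) *\<^sub>R Emat r s) $ a $ b = X $ a $ b" for a b
  proof -
    have "(\<Sum>r\<in>UNIV. \<Sum>s\<in>UNIV. (X $ r $ s) *\<^sub>R Emat r s) $ a $ b
        = (\<Sum>r\<in>UNIV. \<Sum>s\<in>UNIV. X $ r $ s * (if a = r \<and> b = s then 1 else 0))"
      by (simp add: Emat_def sum_component)
    also have "\<dots> = (\<Sum>r\<in>UNIV. \<Sum>s\<in>UNIV. (if a = r then (if b = s then X $ r $ s else 0) else 0))"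
      by (intro sum.cong refl) auto
    also have "\<dots> = (\<Sum>r\<in>UNIV. (if a = r then (\<Sum>s\<in>UNIV. if b = s then X $ r $ s else 0) else 0))"
      by (intro sum.cong refl) auto
    also have "\<dots> = X $ a $ b" by simp
    finally show ?thesis .
  qed
  then show ?thesis by (simp add: vec_eq_iff)
qed

definition Dl :: "nat \<Rightarrow> 'nu::finite \<Rightarrow> 'nx::finite \<Rightarrow> ('nx,'nu) pol" where
  "Dl i r s = (\<lambda>k. if k = i then Emat r s else 0)"

lemma linp_decomp:
  assumes "linp H L"
  shows "L X = (\<Sum>k<H. \<Sum>r\<in>UNIV. \<Sum>s\<in>UNIV. (X k $ r $ s) *\<^sub>R L (Dl k r s))"
proof -
  let ?Z = "\<lambda>k'. \<Sum>k<H. \<Sum>r\<in>UNIV. \<Sum>s\<in>UNIV. (X k $ r $ s) *\<^sub>R Dl k r s k'"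
  have zk: "?Z k' = X k'" if "k' < H" for k'
  proof -
    have "?Z k' = (\<Sum>k<H. if k = k' then (\<Sum>r\<in>UNIV. \<Sum>s\<in>UNIV. (X k $ r $ s) *\<^sub>R Emat r s) else 0)"
      by (intro sum.cong) (auto simp: Dl_def)
    also have "\<dots> = X k'" using that by (simp add: Emat_decomp)
    finally show ?thesis .
  qed
  have "L X = L ?Z" by (rule linp_loc[OF assms]) (simp add: zk)
  also have "\<dots> = (\<Sum>k<H. L (\<lambda>k'. \<Sum>r\<in>UNIV. \<Sum>s\<in>UNIV. (X k $ r $ s) *\<^sub>R Dl k r s k'))"
    by (rule linp_sum[OF assms]) simp
  also have "\<dots> = (\<Sum>k<H. \<Sum>r\<in>UNIV. L (\<lambda>k'. \<Sum>s\<in>UNIV. (X k $ r $ s) *\<^sub>R Dl k r s k'))"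
    by (intro sum.cong refl linp_sum[OF assms]) simp
  also have "\<dots> = (\<Sum>k<H. \<Sum>r\<in>UNIV. \<Sum>s\<in>UNIV. L (\<lambda>k'. (X k $ r $ s) *\<^sub>R Dl k r s k'))"
    by (intro sum.cong refl linp_sum[OF assms]) simp
  also have "\<dots> = (\<Sum>k<H. \<Sum>r\<in>UNIV. \<Sum>s\<in>UNIV. (X k $ r $ s) *\<^sub>R L (Dl k r s))"
    by (intro sum.cong refl linp_scale[OF assms])
  finally show ?thesis .
qed

lemma if_add0: "(if c then a + b else 0) = (if c then a else 0) + (if c then b else (0::'a::monoid_add))"
  by simp
lemma if_scale0: "(if c then k *\<^sub>R a else 0) = k *\<^sub>R (if c then a else (0::'a::real_vector))"
  by simp

lemma mm_scaleR: "(A::real^'n::finite^'m::finite) ** (k *\<^sub>R (B::real^'p::finite^'n)) = k *\<^sub>R (A ** B)"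
  by (simp add: matrix_matrix_mult_def vec_eq_iff sum_distrib_left mult.left_commute)
lemma mv_scaleR: "(A::real^'n::finite^'m::finite) *v (k *\<^sub>R v) = k *\<^sub>R (A *v v)"
  by (simp add: matrix_vector_mult_def vec_eq_iff sum_distrib_left mult.left_commute)
lemma smv_scaleR: "((k *\<^sub>R A)::real^'n::finite^'m::finite) *v v = k *\<^sub>R (A *v v)"
  by (simp add: matrix_vector_mult_def vec_eq_iff sum_distrib_left mult.assoc)

locale sysl =
  fixes A :: "real^'nx::finite^'nx" and B :: "real^'nu::finite^'nx" and K :: "real^'nx^'nu"
    and H :: nat and w :: "nat \<Rightarrow> 'w \<Rightarrow> real^'nx" and \<omega> :: 'w
begin

definition y0 :: "int \<Rightarrow> real^'nx" where
  "y0 t = (\<Sum>i\<in>{0..2*H}. (if i \<le> H then mpow (A - B ** K) i else 0) *v wz w \<omega> (t - 1 - int i))"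

definition LyP :: "(int \<Rightarrow> ('nx,'nu) pol) \<Rightarrow> int \<Rightarrow> real^'nx" where
  "LyP Ms t = (\<Sum>i\<in>{0..2*H}. (\<Sum>j\<in>{0..H}. if 1 \<le> i - j \<and> i - j \<le> H
        then mpow (A - B ** K) j ** B ** Ms (t - 1 - int j) (i - j - 1) else 0) *v wz w \<omega> (t - 1 - int i))"

definition LvP :: "(int \<Rightarrow> ('nx,'nu) pol) \<Rightarrow> int \<Rightarrow> real^'nu" where
  "LvP Ms t = (\<Sum>i\<in>{1..H}. (Ms t) (i - 1) *v wz w \<omega> (t - int i))"

lemma ysur_split: "ysur A B K H w Ms t \<omega> = y0 t + LyP Ms t"
  unfolding ysur_def y0_def LyP_def Psi_def
  by (simp add: matrix_vector_mult_add_rdistrib sum.distrib algebra_simps)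

lemma vsur_split: "vsur A B K H w Ms t \<omega> = - (K *v ysur A B K H w Ms t \<omega>) + LvP Ms t"
  unfolding vsur_def LvP_def by simp

definition Ly :: "('nx,'nu) pol \<Rightarrow> int \<Rightarrow> real^'nx" where "Ly X t = LyP (\<lambda>_. X) t"
definition Lv :: "('nx,'nu) pol \<Rightarrow> int \<Rightarrow> real^'nu" where "Lv X t = - (K *v Ly X t) + LvP (\<lambda>_. X) t"

lemma linp_Ly: "linp H (\<lambda>X. Ly X t)"
proof (rule linpI)
  fix X Y :: "('nx,'nu) pol"
  show "Ly (\<lambda>k. X k + Y k) t = Ly X t + Ly Y t"
    unfolding Ly_def LyP_def
    by (simp only: matrix_add_ldistrib if_add0 sum.distrib matrix_vector_mult_add_rdistrib)
next
  fix a and X :: "('nx,'nu) pol"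
  show "Ly (\<lambda>k. a *\<^sub>R X k) t = a *\<^sub>R Ly X t"
    unfolding Ly_def LyP_def
    by (simp only: mm_scaleR if_scale0 scaleR_sum_right[symmetric] smv_scaleR)
next
  fix X Y :: "('nx,'nu) pol"
  assume h: "\<And>k. k < H \<Longrightarrow> X k = Y k"
  show "Ly X t = Ly Y t"
    unfolding Ly_def LyP_def
    by (intro sum.cong refl arg_cong2[where f="(*v)"]) (auto simp: h)
qed

lemma linp_LvP: "linp H (\<lambda>X. LvP (\<lambda>_. X) t)"
proof (rule linpI)
  fix X Y :: "('nx,'nu) pol"
  show "LvP (\<lambda>_. (\<lambda>k. X k + Y k)) t = LvP (\<lambda>_. X) t + LvP (\<lambda>_. Y) t"
    unfolding LvP_def by (simp add: sum.distrib matrix_vector_mult_add_rdistrib)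
next
  fix a and X :: "('nx,'nu) pol"
  show "LvP (\<lambda>_. (\<lambda>k. a *\<^sub>R X k)) t = a *\<^sub>R LvP (\<lambda>_. X) t"
    unfolding LvP_def by (simp add: scaleR_sum_right smv_scaleR)
next
  fix X Y :: "('nx,'nu) pol"
  assume h: "\<And>k. k < H \<Longrightarrow> X k = Y k"
  show "LvP (\<lambda>_. X) t = LvP (\<lambda>_. Y) t"
    unfolding LvP_def by (intro sum.cong refl arg_cong2[where f="(*v)"]) (auto simp: h)
qed

lemma linp_Lv: "linp H (\<lambda>X. Lv X t)"
proof -
  have a: "linp H (\<lambda>X. Ly X t)" "linp H (\<lambda>X. LvP (\<lambda>_. X) t)" by (rule linp_Ly, rule linp_LvP)
  show ?thesis
  proof (rule linpI)
    fix X Y :: "('nx,'nu) pol"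
    have "Ly (\<lambda>k. X k + Y k) t = Ly X t + Ly Y t" by (rule linp_add[OF a(1)])
    moreover have "LvP (\<lambda>_. (\<lambda>k. X k + Y k)) t = LvP (\<lambda>_. X) t + LvP (\<lambda>_. Y) t"
      by (rule linp_add[OF a(2)])
    ultimately show "Lv (\<lambda>k. X k + Y k) t = Lv X t + Lv Y t"
      unfolding Lv_def by (simp add: matrix_vector_right_distrib)
  next
    fix c and X :: "('nx,'nu) pol"
    have "Ly (\<lambda>k. c *\<^sub>R X k) t = c *\<^sub>R Ly X t" by (rule linp_scale[OF a(1)])
    moreover have "LvP (\<lambda>_. (\<lambda>k. c *\<^sub>R X k)) t = c *\<^sub>R LvP (\<lambda>_. X) t"
      by (rule linp_scale[OF a(2)])
    ultimately show "Lv (\<lambda>k. c *\<^sub>R X k) t = c *\<^sub>R Lv X t"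
      unfolding Lv_def by (simp add: mv_scaleR scaleR_right_distrib scaleR_right_diff_distrib)
  next
    fix X Y :: "('nx,'nu) pol"
    assume h: "\<And>k. k < H \<Longrightarrow> X k = Y k"
    have "Ly X t = Ly Y t" by (rule linp_loc[OF a(1) h])
    moreover have "LvP (\<lambda>_. X) t = LvP (\<lambda>_. Y) t" by (rule linp_loc[OF a(2) h])
    ultimately show "Lv X t = Lv Y t" unfolding Lv_def by simp
  qed
qed

lemma ysur_const: "ysur A B K H w (\<lambda>_. X) t \<omega> = y0 t + Ly X t"
  by (simp add: ysur_split Ly_def)

lemma vsur_const: "vsur A B K H w (\<lambda>_. X) t \<omega> = - (K *v y0 t) + Lv X t"
  by (simp add: vsur_split ysur_const Lv_def matrix_vector_right_distrib)

end


lemma convex_tangent: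
  fixes g :: "'a::real_normed_vector \<Rightarrow> real"
  assumes cv: "convex_on UNIV g" and dg: "(g has_derivative g') (at z)"
  shows "g z + g' (z' - z) \<le> g z'"
proof -
  define d where "d = z' - z"
  define \<phi> where "\<phi> = (\<lambda>e::real. g (z + e *\<^sub>R d))"
  have lin: "linear g'" using has_derivative_bounded_linear[OF dg] by (rule bounded_linear.linear)
  have d1: "((\<lambda>e::real. z + e *\<^sub>R d) has_derivative (\<lambda>e. e *\<^sub>R d)) (at 0)"
    by (intro derivative_eq_intros) auto
  have dg0: "(g has_derivative g') (at ((\<lambda>e::real. z + e *\<^sub>R d) 0))" using dg by simp
  have "(\<phi> has_derivative (\<lambda>e. g' (e *\<^sub>R d))) (at 0)"
    unfolding \<phi>_def using has_derivative_compose[OF d1 dg0] by simp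
  moreover have "(\<lambda>e. g' (e *\<^sub>R d)) = (*) (g' d)"
    using lin by (simp add: fun_eq_iff linear_scale mult.commute)
  ultimately have der: "(\<phi> has_real_derivative g' d) (at 0)"
    by (simp only: has_field_derivative_def)
  have cvp: "convex_on UNIV \<phi>"
  proof (rule convex_onI)
    fix t x y :: real
    assume "0 < t" "t < 1"
    have "\<phi> ((1 - t) *\<^sub>R x + t *\<^sub>R y) = g ((1 - t) *\<^sub>R (z + x *\<^sub>R d) + t *\<^sub>R (z + y *\<^sub>R d))"
      unfolding \<phi>_def by (simp add: algebra_simps)
    also have "\<dots> \<le> (1 - t) * g (z + x *\<^sub>R d) + t * g (z + y *\<^sub>R d)"
      using convex_onD[OF cv, of t] \<open>0 < t\<close> \<open>t < 1\<close> by simp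
    finally show "\<phi> ((1 - t) *\<^sub>R x + t *\<^sub>R y) \<le> (1 - t) * \<phi> x + t * \<phi> y" unfolding \<phi>_def .
  qed simp
  have "\<phi> 1 - \<phi> 0 \<ge> g' d * (1 - 0)"
    by (rule convex_on_imp_above_tangent[OF cvp]) (auto intro: has_field_derivative_at_within[OF der])
  then show ?thesis unfolding \<phi>_def d_def by simp
qed

lemma linp_inner:
  assumes "linp H L1" "linp H L2"
  shows "linp H (\<lambda>D. gx \<bullet> L1 D + gu \<bullet> L2 D)"
proof (rule linpI)
  fix X Y show "gx \<bullet> L1 (\<lambda>k. X k + Y k) + gu \<bullet> L2 (\<lambda>k. X k + Y k) = gx \<bullet> L1 X + gu \<bullet> L2 X + (gx \<bullet> L1 Y + gu \<bullet> L2 Y)"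
    by (simp add: linp_add[OF assms(1)] linp_add[OF assms(2)] inner_add_right)
next
  fix a X show "gx \<bullet> L1 (\<lambda>k. a *\<^sub>R X k) + gu \<bullet> L2 (\<lambda>k. a *\<^sub>R X k) = a *\<^sub>R (gx \<bullet> L1 X + gu \<bullet> L2 X)"
    by (simp add: linp_scale[OF assms(1)] linp_scale[OF assms(2)] inner_scaleR_right algebra_simps)
next
  fix X Y :: "('a,'b) pol" assume h: "\<And>k. k < H \<Longrightarrow> X k = Y k"
  show "gx \<bullet> L1 X + gu \<bullet> L2 X = gx \<bullet> L1 Y + gu \<bullet> L2 Y"
    using linp_loc[OF assms(1) h] linp_loc[OF assms(2) h] by simp
qed

lemma inner_mat_sum: "(X::real^'n::finite^'m::finite) \<bullet> Y = (\<Sum>r\<in>UNIV. \<Sum>s\<in>UNIV. X $ r $ s * Y $ r $ s)"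
  by (simp add: inner_vec_def)

context sysl
begin

lemma Ly_pert: "Ly (\<lambda>k. X k + e *\<^sub>R D k) t = Ly X t + e *\<^sub>R Ly D t"
  using linp_add[OF linp_Ly, of X "\<lambda>k. e *\<^sub>R D k"] linp_scale[OF linp_Ly] by simp

lemma Lv_pert: "Lv (\<lambda>k. X k + e *\<^sub>R D k) t = Lv X t + e *\<^sub>R Lv D t"
  using linp_add[OF linp_Lv, of X "\<lambda>k. e *\<^sub>R D k"] linp_scale[OF linp_Lv] by simp

lemma fsur_expr: "fsur A B K H c w t X \<omega> = c t (y0 (int t) + Ly X (int t)) (- (K *v y0 (int t)) + Lv X (int t))"
  by (simp add: fsur_def Fsur_def ysur_const vsur_const)

lemma grad_exists:
  assumes "cost_assm Gc c"
  obtains gx gu where "norm gx \<le> Gc * norm (y0 (int t) + Ly X (int t))"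
    "norm gu \<le> Gc * norm (- (K *v y0 (int t)) + Lv X (int t))"
    "((\<lambda>(x',u'). c t x' u') has_derivative (\<lambda>(dx,du). gx \<bullet> dx + gu \<bullet> du))
        (at (y0 (int t) + Ly X (int t), - (K *v y0 (int t)) + Lv X (int t)))"
  using assms unfolding cost_assm_def by blast

lemma fsur_line_deriv:
  assumes "((\<lambda>(x',u'). c t x' u') has_derivative (\<lambda>(dx,du). gx \<bullet> dx + gu \<bullet> du))
        (at (y0 (int t) + Ly X (int t), - (K *v y0 (int t)) + Lv X (int t)))"
  shows "((\<lambda>e. fsur A B K H c w t (\<lambda>k. X k + e *\<^sub>R D k) \<omega>) has_real_derivative
            (gx \<bullet> Ly D (int t) + gu \<bullet> Lv D (int t))) (at 0)"
proof -
  let ?Y = "y0 (int t) + Ly X (int t)" and ?V = "- (K *v y0 (int t)) + Lv X (int t)"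
  let ?a = "Ly D (int t)" and ?b = "Lv D (int t)"
  have d1: "((\<lambda>e::real. (?Y + e *\<^sub>R ?a, ?V + e *\<^sub>R ?b)) has_derivative (\<lambda>e. (e *\<^sub>R ?a, e *\<^sub>R ?b))) (at 0)"
    by (intro derivative_eq_intros) auto
  have dg0: "((\<lambda>(x',u'). c t x' u') has_derivative (\<lambda>(dx,du). gx \<bullet> dx + gu \<bullet> du))
        (at ((\<lambda>e::real. (?Y + e *\<^sub>R ?a, ?V + e *\<^sub>R ?b)) 0))" using assms by simp
  have "((\<lambda>e. (\<lambda>(x',u'). c t x' u') (?Y + e *\<^sub>R ?a, ?V + e *\<^sub>R ?b)) has_derivative
          (\<lambda>e. (\<lambda>(dx,du). gx \<bullet> dx + gu \<bullet> du) (e *\<^sub>R ?a, e *\<^sub>R ?b))) (at 0)"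
    by (rule has_derivative_compose[OF d1 dg0])
  moreover have "(\<lambda>e. (\<lambda>(dx,du). gx \<bullet> dx + gu \<bullet> du) (e *\<^sub>R ?a, e *\<^sub>R ?b)) = (*) (gx \<bullet> ?a + gu \<bullet> ?b)"
    by (simp add: fun_eq_iff algebra_simps)
  moreover have "(\<lambda>e. (\<lambda>(x',u'). c t x' u') (?Y + e *\<^sub>R ?a, ?V + e *\<^sub>R ?b)) =
      (\<lambda>e. fsur A B K H c w t (\<lambda>k. X k + e *\<^sub>R D k) \<omega>)"
    by (simp add: fun_eq_iff fsur_expr Ly_pert Lv_pert algebra_simps)
  ultimately show ?thesis by (simp only: has_field_derivative_def)
qed

lemma gradM_entry:
  assumes "((\<lambda>(x',u'). c t x' u') has_derivative (\<lambda>(dx,du). gx \<bullet> dx + gu \<bullet> du))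
        (at (y0 (int t) + Ly X (int t), - (K *v y0 (int t)) + Lv X (int t)))" "i < H"
  shows "gradM H (\<lambda>M. fsur A B K H c w t M \<omega>) X i $ r $ s
     = gx \<bullet> Ly (Dl i r s) (int t) + gu \<bullet> Lv (Dl i r s) (int t)"
proof -
  have e: "(\<lambda>e. fsur A B K H c w t (\<lambda>k. if k = i then X k + e *\<^sub>R Emat r s else X k) \<omega>)
      = (\<lambda>e. fsur A B K H c w t (\<lambda>k. X k + e *\<^sub>R Dl i r s k) \<omega>)"
    by (rule ext, rule arg_cong[where f="\<lambda>M. fsur A B K H c w t M \<omega>"]) (auto simp: Dl_def)
  show ?thesis
    using assms(2) DERIV_imp_deriv[OF fsur_line_deriv[where c=c and t=t and gx=gx and gu=gu and X=X and D="Dl i r s", OF assms(1)]]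
    by (simp add: gradM_def e)
qed

lemma grad_ineq:
  assumes cost: "cost_assm Gc c"
    and dg: "((\<lambda>(x',u'). c t x' u') has_derivative (\<lambda>(dx,du). gx \<bullet> dx + gu \<bullet> du))
        (at (y0 (int t) + Ly X (int t), - (K *v y0 (int t)) + Lv X (int t)))"
  shows "fsur A B K H c w t X \<omega> - fsur A B K H c w t M \<omega>
     \<le> (\<Sum>i<H. gradM H (\<lambda>M. fsur A B K H c w t M \<omega>) X i \<bullet> (X i - M i))"
proof -
  let ?Y = "\<lambda>X. y0 (int t) + Ly X (int t)" and ?V = "\<lambda>X. - (K *v y0 (int t)) + Lv X (int t)"
  let ?Lf = "\<lambda>D. gx \<bullet> Ly D (int t) + gu \<bullet> Lv D (int t)"
  have lf: "linp H ?Lf" by (rule linp_inner[OF linp_Ly linp_Lv])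
  have cv: "convex_on UNIV (\<lambda>(x',u'). c t x' u')" using cost unfolding cost_assm_def by blast
  have "(\<lambda>(x',u'). c t x' u') (?Y X, ?V X) + (\<lambda>(dx,du). gx \<bullet> dx + gu \<bullet> du) ((?Y M, ?V M) - (?Y X, ?V X))
      \<le> (\<lambda>(x',u'). c t x' u') (?Y M, ?V M)"
    by (rule convex_tangent[OF cv dg])
  then have "fsur A B K H c w t X \<omega> - fsur A B K H c w t M \<omega> \<le> gx \<bullet> (Ly X (int t) - Ly M (int t)) + gu \<bullet> (Lv X (int t) - Lv M (int t))"
    by (simp add: fsur_expr inner_diff_right)
  also have "\<dots> = ?Lf (\<lambda>k. X k - M k)"
    by (simp add: linp_diff[OF linp_Ly] linp_diff[OF linp_Lv])
  also have "\<dots> = (\<Sum>k<H. \<Sum>r\<in>UNIV. \<Sum>s\<in>UNIV. ((X k - M k) $ r $ s) *\<^sub>R ?Lf (Dl k r s))"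
    by (rule linp_decomp[OF lf])
  also have "\<dots> = (\<Sum>i<H. gradM H (\<lambda>M. fsur A B K H c w t M \<omega>) X i \<bullet> (X i - M i))"
  proof (rule sum.cong[OF refl])
    fix i assume "i \<in> {..<H}"
    then have i: "i < H" by simp
    show "(\<Sum>r\<in>UNIV. \<Sum>s\<in>UNIV. ((X i - M i) $ r $ s) *\<^sub>R ?Lf (Dl i r s))
        = gradM H (\<lambda>M. fsur A B K H c w t M \<omega>) X i \<bullet> (X i - M i)"
      unfolding inner_mat_sum gradM_entry[where c=c and t=t and gx=gx and gu=gu and X=X, OF dg i] by (simp add: mult.commute)
  qed
  finally show ?thesis .
qed

end


definition sqf :: "nat \<Rightarrow> ('nx::finite,'nu::finite) pol \<Rightarrow> real" where
  "sqf H X = (\<Sum>i<H. (norm (X i))^2)"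
definition ipH :: "nat \<Rightarrow> ('nx::finite,'nu::finite) pol \<Rightarrow> ('nx,'nu) pol \<Rightarrow> real" where
  "ipH H X Y = (\<Sum>i<H. X i \<bullet> Y i)"

lemma norm_sq_mat: "(norm (X::real^'n::finite^'m::finite))^2 = (\<Sum>r\<in>UNIV. \<Sum>s\<in>UNIV. (X $ r $ s)^2)"
  unfolding power2_norm_eq_inner inner_mat_sum by (simp add: power2_eq_square)

lemma frob_sqf: "frob H X = sqrt (sqf H X)"
  unfolding frob_def sqf_def by (simp add: norm_sq_mat)

lemma sqf_nonneg: "0 \<le> sqf H X" unfolding sqf_def by (simp add: sum_nonneg)

lemma frob_sq: "(frob H X)^2 = sqf H X" by (simp add: frob_sqf sqf_nonneg)

lemma norm_add_sq: "(norm (a + b))^2 = (norm a)^2 + 2 * (a \<bullet> b) + (norm (b::'a::real_inner))^2"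
  by (simp add: power2_norm_eq_inner inner_add_left inner_add_right inner_commute)

lemma sqf_add: "sqf H (\<lambda>i. a i + b i) = sqf H a + 2 * ipH H a b + sqf H b"
  unfolding sqf_def ipH_def by (simp add: norm_add_sq sum.distrib sum_distrib_left)

lemma opnorm_cont: "continuous_on UNIV (opnorm :: real^'n::finite^'m::finite \<Rightarrow> real)"
  unfolding continuous_on_iff
proof (intro ballI allI impI)
  fix x :: "real^'n^'m" and e :: real assume "0 < e"
  show "\<exists>d>0. \<forall>x'\<in>UNIV. dist x' x < d \<longrightarrow> dist (opnorm x') (opnorm x) < e"
  proof (intro exI[of _ e] conjI ballI impI)
    fix x' :: "real^'n^'m" assume "dist x' x < e"
    have "opnorm x' \<le> opnorm x + opnorm (x' - x)" using opnorm_add[of x "x' - x"] by simp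
    moreover have "opnorm x \<le> opnorm x' + opnorm (x - x')" using opnorm_add[of x' "x - x'"] by simp
    moreover have "opnorm (x' - x) \<le> dist x' x" by (simp add: dist_norm opnorm_le_norm)
    moreover have "opnorm (x - x') \<le> dist x' x" using opnorm_le_norm[of "x - x'"] by (simp add: dist_norm norm_minus_commute)
    ultimately show "dist (opnorm x') (opnorm x) < e" using \<open>dist x' x < e\<close> by (simp add: dist_real_def abs_le_iff)
  qed (use \<open>0 < e\<close> in auto)
qed

lemma opnorm_ball_compact: "compact {P :: real^'n::finite^'m::finite. opnorm P \<le> \<rho>}"
proof -
  have "closed {P :: real^'n^'m. opnorm P \<le> (\<lambda>_. \<rho>) P}"
    by (rule closed_Collect_le[OF opnorm_cont continuous_on_const])
  then have "closed {P :: real^'n^'m. opnorm P \<le> \<rho>}" by simp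
  moreover have "bounded {P :: real^'n^'m. opnorm P \<le> \<rho>}"
    unfolding bounded_iff
  proof (intro exI ballI)
    fix P :: "real^'n^'m" assume "P \<in> {P. opnorm P \<le> \<rho>}"
    then have "opnorm P \<le> \<rho>" by simp
    then show "norm P \<le> sqrt (real CARD('n)) * \<rho>"
    proof -
      have "sqrt (real CARD('n)) * opnorm P \<le> sqrt (real CARD('n)) * \<rho>"
        using \<open>opnorm P \<le> \<rho>\<close> by (intro mult_left_mono) auto
      then show ?thesis using norm_le_sqrt_opnorm[of P] by linarith
    qed
  qed
  ultimately show ?thesis by (simp add: compact_eq_bounded_closed)
qed

definition rad :: "real \<Rightarrow> real \<Rightarrow> real \<Rightarrow> nat \<Rightarrow> real" where
  "rad kB \<kappa> \<gamma> i = 2 * kB * \<kappa>^3 * (1 - \<gamma>)^i"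

lemma Mset_iff: "M \<in> Mset H kB \<kappa> \<gamma> \<longleftrightarrow> (\<forall>i<H. opnorm (M i) \<le> rad kB \<kappa> \<gamma> i) \<and> (\<forall>i\<ge>H. M i = 0)"
  by (simp add: Mset_def rad_def)

locale mset_ok =
  fixes kB \<kappa> \<gamma> :: real
  assumes kB0: "0 \<le> kB" and k0: "0 \<le> \<kappa>" and g1: "\<gamma> \<le> 1"
begin

lemma rad_nonneg: "0 \<le> rad kB \<kappa> \<gamma> i"
  unfolding rad_def using kB0 k0 g1 by simp

lemma Mset_convex:
  assumes "P \<in> Mset H kB \<kappa> \<gamma>" "Q \<in> Mset H kB \<kappa> \<gamma>" "0 \<le> s" "s \<le> 1"
  shows "(\<lambda>i. P i + s *\<^sub>R (Q i - P i)) \<in> Mset H kB \<kappa> \<gamma>"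
  unfolding Mset_iff
proof (intro conjI allI impI)
  fix i assume i: "i < H"
  have eq: "P i + s *\<^sub>R (Q i - P i) = (1 - s) *\<^sub>R P i + s *\<^sub>R Q i" by (simp add: algebra_simps)
  have "opnorm (P i + s *\<^sub>R (Q i - P i)) \<le> opnorm ((1 - s) *\<^sub>R P i) + opnorm (s *\<^sub>R Q i)"
    unfolding eq by (rule opnorm_add)
  also have "\<dots> \<le> (1 - s) * opnorm (P i) + s * opnorm (Q i)"
    using opnorm_scale[of "1 - s" "P i"] opnorm_scale[of s "Q i"] assms(3,4) by simp
  also have "\<dots> \<le> (1 - s) * rad kB \<kappa> \<gamma> i + s * rad kB \<kappa> \<gamma> i"
    using assms i unfolding Mset_iff by (intro add_mono mult_left_mono) auto
  finally show "opnorm (P i + s *\<^sub>R (Q i - P i)) \<le> rad kB \<kappa> \<gamma> i" by (simp add: algebra_simps)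
next
  fix i assume "H \<le> i"
  then show "P i + s *\<^sub>R (Q i - P i) = 0" using assms unfolding Mset_iff by simp
qed

lemma proj_exists:
  "\<exists>P. P \<in> Mset H kB \<kappa> \<gamma> \<and> (\<forall>Q\<in>Mset H kB \<kappa> \<gamma>. frob H (\<lambda>i. P i - X i) \<le> frob H (\<lambda>i. Q i - X i))"
proof -
  have "\<forall>i. \<exists>p. opnorm p \<le> rad kB \<kappa> \<gamma> i \<and> (\<forall>q. opnorm q \<le> rad kB \<kappa> \<gamma> i \<longrightarrow> norm (p - X i) \<le> norm (q - X i))"
  proof
    fix i
    have "0 \<in> {P::real^'nx^'nu. opnorm P \<le> rad kB \<kappa> \<gamma> i}" using rad_nonneg[of i] by (simp add: opnorm_zero)
    then have "\<exists>p\<in>{P. opnorm P \<le> rad kB \<kappa> \<gamma> i}. \<forall>q\<in>{P. opnorm P \<le> rad kB \<kappa> \<gamma> i}. norm (p - X i) \<le> norm (q - X i)"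
      by (intro continuous_attains_inf opnorm_ball_compact continuous_intros) auto
    then show "\<exists>p. opnorm p \<le> rad kB \<kappa> \<gamma> i \<and> (\<forall>q. opnorm q \<le> rad kB \<kappa> \<gamma> i \<longrightarrow> norm (p - X i) \<le> norm (q - X i))"
      by auto
  qed
  from choice[OF this] obtain p where p0: "\<forall>i. opnorm (p i) \<le> rad kB \<kappa> \<gamma> i \<and> (\<forall>q. opnorm q \<le> rad kB \<kappa> \<gamma> i \<longrightarrow> norm (p i - X i) \<le> norm (q - X i))"
    by blast
  then have p: "\<And>i. opnorm (p i) \<le> rad kB \<kappa> \<gamma> i"
    "\<And>i q. opnorm q \<le> rad kB \<kappa> \<gamma> i \<Longrightarrow> norm (p i - X i) \<le> norm (q - X i)"
    by blast+
  define P where "P = (\<lambda>i. if i < H then p i else 0)"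
  have PS: "P \<in> Mset H kB \<kappa> \<gamma>" unfolding Mset_iff P_def using p(1) by auto
  have "frob H (\<lambda>i. P i - X i) \<le> frob H (\<lambda>i. Q i - X i)" if Q: "Q \<in> Mset H kB \<kappa> \<gamma>" for Q
    unfolding frob_sqf sqf_def
  proof (intro real_sqrt_le_mono sum_mono power_mono)
    fix i assume "i \<in> {..<H}"
    then show "norm (P i - X i) \<le> norm (Q i - X i)" using Q p(2) unfolding P_def Mset_iff by auto
  qed simp
  then show ?thesis using PS by blast
qed

lemma proj_in: "proj H (Mset H kB \<kappa> \<gamma>) X \<in> Mset H kB \<kappa> \<gamma>"
  and proj_min: "Q \<in> Mset H kB \<kappa> \<gamma> \<Longrightarrow> frob H (\<lambda>i. proj H (Mset H kB \<kappa> \<gamma>) X i - X i) \<le> frob H (\<lambda>i. Q i - X i)"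
  using someI_ex[OF proj_exists[of H X]] unfolding proj_def by blast+

lemma proj_nonexp:
  assumes Q: "Q \<in> Mset H kB \<kappa> \<gamma>"
  shows "sqf H (\<lambda>i. proj H (Mset H kB \<kappa> \<gamma>) X i - Q i) \<le> sqf H (\<lambda>i. X i - Q i)"
proof -
  let ?P = "proj H (Mset H kB \<kappa> \<gamma>) X"
  let ?a = "\<lambda>i. ?P i - X i" and ?b = "\<lambda>i. Q i - ?P i"
  have key: "0 \<le> 2 * ipH H ?a ?b + s * sqf H ?b" if s: "0 < s" "s \<le> 1" for s
  proof -
    have "(\<lambda>i. ?P i + s *\<^sub>R (Q i - ?P i)) \<in> Mset H kB \<kappa> \<gamma>"
      using Mset_convex[OF proj_in Q] s by auto
    then have "frob H ?a \<le> frob H (\<lambda>i. (?P i + s *\<^sub>R (Q i - ?P i)) - X i)" by (rule proj_min)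
    then have "sqf H ?a \<le> sqf H (\<lambda>i. ?a i + s *\<^sub>R ?b i)"
      unfolding frob_sqf by (simp add: algebra_simps)
    also have "\<dots> = sqf H ?a + 2 * ipH H ?a (\<lambda>i. s *\<^sub>R ?b i) + sqf H (\<lambda>i. s *\<^sub>R ?b i)"
      by (rule sqf_add)
    also have "ipH H ?a (\<lambda>i. s *\<^sub>R ?b i) = s * ipH H ?a ?b"
      unfolding ipH_def by (simp add: sum_distrib_left)
    also have "sqf H (\<lambda>i. s *\<^sub>R ?b i) = s^2 * sqf H ?b"
      unfolding sqf_def by (simp add: sum_distrib_left power_mult_distrib)
    finally have "0 \<le> s * (2 * ipH H ?a ?b + s * sqf H ?b)" by (simp add: algebra_simps power2_eq_square)
    then show ?thesis using s by (simp add: zero_le_mult_iff)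
  qed
  have ip0: "0 \<le> ipH H ?a ?b"
  proof (rule ccontr)
    assume neg: "\<not> 0 \<le> ipH H ?a ?b"
    show False
    proof (cases "sqf H ?b = 0")
      case True then show False using key[of 1] neg by simp
    next
      case False
      then have sp: "0 < sqf H ?b" using sqf_nonneg[of H ?b] by simp
      define s where "s = min 1 (- ipH H ?a ?b / sqf H ?b)"
      have s0: "0 < s" using neg sp by (simp add: s_def field_simps)
      have "s \<le> - ipH H ?a ?b / sqf H ?b" unfolding s_def by simp
      then have "s * sqf H ?b \<le> (- ipH H ?a ?b / sqf H ?b) * sqf H ?b"
        using sp by (intro mult_right_mono) auto
      then have "s * sqf H ?b \<le> - ipH H ?a ?b" using sp by simp
      then show False using key[OF s0] neg by (simp add: s_def)
    qed
  qed
  have "sqf H (\<lambda>i. X i - Q i) = sqf H (\<lambda>i. (X i - ?P i) + (?P i - Q i))" by simp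
  also have "\<dots> = sqf H (\<lambda>i. X i - ?P i) + 2 * ipH H (\<lambda>i. X i - ?P i) (\<lambda>i. ?P i - Q i) + sqf H (\<lambda>i. ?P i - Q i)"
    by (rule sqf_add)
  also have "ipH H (\<lambda>i. X i - ?P i) (\<lambda>i. ?P i - Q i) = ipH H ?a ?b"
    unfolding ipH_def by (intro sum.cong refl) (simp add: inner_diff_left inner_diff_right algebra_simps)
  finally show ?thesis using ip0 sqf_nonneg[of H "\<lambda>i. X i - ?P i"] by simp
qed

end


lemma reindex_win:
  fixes H j :: nat
  assumes "j \<le> H"
  shows "(\<Sum>i\<in>{0..2*H}. if 1 \<le> i - j \<and> i - j \<le> H then g (i - j - 1) else (0::real)) = (\<Sum>k<H. g k)"
proof -
  let ?I = "(\<lambda>k. k + j + 1) ` {..<H}"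
  have sub: "?I \<subseteq> {0..2*H}" using assms by auto
  have c: "(1 \<le> i - j \<and> i - j \<le> H) \<longleftrightarrow> i \<in> ?I" for i
  proof
    assume "1 \<le> i - j \<and> i - j \<le> H"
    then have "i = (i - j - 1) + j + 1" "i - j - 1 < H" by auto
    then show "i \<in> ?I" by blast
  qed auto
  have "(\<Sum>i\<in>{0..2*H}. if 1 \<le> i - j \<and> i - j \<le> H then g (i - j - 1) else 0)
      = (\<Sum>i\<in>{0..2*H}. if i \<in> ?I then g (i - j - 1) else 0)"
    by (intro sum.cong refl if_cong[OF c refl refl])
  also have "\<dots> = (\<Sum>i\<in>{0..2*H} \<inter> ?I. g (i - j - 1))" by (simp only: sum.inter_restrict[OF finite_atLeastAtMost])
  also have "{0..2*H} \<inter> ?I = ?I" using sub by blast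
  also have "(\<Sum>i\<in>?I. g (i - j - 1)) = (\<Sum>k<H. g k)"
    by (subst sum.reindex) (auto simp: inj_on_def)
  finally show ?thesis .
qed

lemma dsum_reindex:
  "(\<Sum>i\<in>{0..2*H}. \<Sum>j\<in>{0..H}. if 1 \<le> i - j \<and> i - j \<le> H then f j (i - j - 1) else (0::real))
    = (\<Sum>j\<in>{0..H}. \<Sum>k<H. f j k)" for H :: nat
  by (subst sum.swap) (intro sum.cong refl reindex_win, auto)

lemma geo_le: "0 < (\<gamma>::real) \<Longrightarrow> \<gamma> \<le> 1 \<Longrightarrow> (\<Sum>k<n. (1 - \<gamma>)^k) \<le> 1 / \<gamma>"
proof -
  assume g: "0 < \<gamma>" "\<gamma> \<le> 1"
  have "(\<Sum>k<n. (1 - \<gamma>)^k) = (1 - (1 - \<gamma>)^n) / \<gamma>" using g by (subst sum_gp_strict) auto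
  also have "\<dots> \<le> 1 / \<gamma>" using g by (intro divide_right_mono) auto
  finally show ?thesis .
qed

lemma opnorm_Emat: "opnorm (Emat r s) \<le> 1"
proof (rule opnorm_le)
  fix v
  have "Emat r s *v v = (v$s) *\<^sub>R axis r 1"
  proof -
    have "(Emat r s *v v) $ a = ((v$s) *\<^sub>R axis r 1) $ a" for a
    proof -
      have "(Emat r s *v v) $ a = (\<Sum>b\<in>UNIV. (if a = r then (if b = s then v $ b else 0) else 0))"
        by (auto simp: Emat_def matrix_vector_mult_def intro!: sum.cong)
      also have "\<dots> = (if a = r then v$s else 0)" by simp
      finally show ?thesis by (simp add: axis_def)
    qed
    then show ?thesis by (simp add: vec_eq_iff)
  qed
  then show "norm (Emat r s *v v) \<le> 1 * norm v" by (simp add: component_le_norm_cart)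
qed simp

locale bnd = sysl A B K H w \<omega> + mset_ok kB \<kappa> \<gamma>
  for A :: "real^'nx::finite^'nx" and B :: "real^'nu::finite^'nx" and K H w \<omega> kB \<kappa> \<gamma> +
  assumes g0: "0 < \<gamma>" and g1': "\<gamma> < 1" and kB1: "1 \<le> kB" and Bk: "opnorm B \<le> kB"
    and k1: "1 \<le> \<kappa>" and Kk: "opnorm K \<le> \<kappa>" and pw: "\<And>j. opnorm (mpow (A - B ** K) j) \<le> \<kappa>^2 * (1-\<gamma>)^j"
begin

definition nb :: "int \<Rightarrow> real \<Rightarrow> bool" where
  "nb t N \<longleftrightarrow> (\<forall>k\<in>{1..2*H+1}. norm (wz w \<omega> (t - int k)) \<le> N)"

lemma nbD: "nb t N \<Longrightarrow> i \<le> 2*H \<Longrightarrow> norm (wz w \<omega> (t - 1 - int i)) \<le> N"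
  unfolding nb_def by (drule bspec[of _ _ "i+1"]) (auto simp: algebra_simps)

lemma nbD2: "nb t N \<Longrightarrow> 1 \<le> i \<Longrightarrow> i \<le> H \<Longrightarrow> norm (wz w \<omega> (t - int i)) \<le> N"
  unfolding nb_def by (drule bspec[of _ _ "i"]) auto

lemma nb_nonneg: "nb t N \<Longrightarrow> 0 \<le> N"
  using nbD[of t N 0] by (meson norm_ge_zero order.trans zero_le)

lemma r0: "0 \<le> 1 - \<gamma>" using g1' by simp

lemma rpow0: "0 \<le> (1 - \<gamma>)^i" by (rule zero_le_power[OF r0])
lemma kr0: "0 \<le> \<kappa>^2 * (1 - \<gamma>)^i" by (simp add: rpow0)

lemma geo: "(\<Sum>k<n. (1 - \<gamma>)^k) \<le> 1 / \<gamma>" using geo_le g0 g1' by simp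

lemma AKB: "opnorm (mpow (A - B ** K) j ** B) \<le> \<kappa>^2 * (1-\<gamma>)^j * kB"
  using opnorm_mult[of "mpow (A - B ** K) j" B] pw[of j] Bk
  by (meson mult_mono opnorm_nonneg order.trans zero_le_power2 mult_nonneg_nonneg r0 zero_le_power)

lemma y0_bound: "nb t N \<Longrightarrow> norm (y0 t) \<le> \<kappa>^2 / \<gamma> * N"
proof -
  assume nb: "nb t N"
  have N0: "0 \<le> N" using nb_nonneg[OF nb] .
  have "norm (y0 t) \<le> (\<Sum>i\<in>{0..2*H}. opnorm (if i \<le> H then mpow (A - B ** K) i else 0) * norm (wz w \<omega> (t - 1 - int i)))"
    unfolding y0_def by (rule norm_sum_mv) simp
  also have "\<dots> \<le> (\<Sum>i\<in>{0..2*H}. \<kappa>^2 * (1-\<gamma>)^i * N)"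
  proof (rule sum_mono)
    fix i assume "i \<in> {0..2*H}"
    then have w: "norm (wz w \<omega> (t - 1 - int i)) \<le> N" using nbD[OF nb] by simp
    have o: "opnorm (if i \<le> H then mpow (A - B ** K) i else 0) \<le> \<kappa>^2 * (1-\<gamma>)^i"
    proof (cases "i \<le> H")
      case True then show ?thesis using pw[of i] by simp
    next
      case False
      have "opnorm (0::real^'nx^'nx) = 0" by (rule opnorm_zero)
      then show ?thesis using False kr0[of i] by simp
    qed
    show "opnorm (if i \<le> H then mpow (A - B ** K) i else 0) * norm (wz w \<omega> (t - 1 - int i)) \<le> \<kappa>^2 * (1-\<gamma>)^i * N"
      by (intro mult_mono o w kr0) simp
  qed
  also have "\<dots> = \<kappa>^2 * N * (\<Sum>i<Suc (2*H). (1-\<gamma>)^i)"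
    by (simp add: sum_distrib_left atLeast0AtMost lessThan_Suc_atMost[symmetric] algebra_simps)
  also have "\<dots> \<le> \<kappa>^2 * N * (1/\<gamma>)" by (intro mult_left_mono geo) (auto simp: N0)
  finally show ?thesis by simp
qed

lemma LyP_bound:
  assumes nb: "nb t N" and rho: "\<And>j k. j \<le> H \<Longrightarrow> k < H \<Longrightarrow> opnorm (Ms (t - 1 - int j) k) \<le> \<rho> k"
  shows "norm (LyP Ms t) \<le> \<kappa>^2 * kB / \<gamma> * (\<Sum>k<H. \<rho> k) * N"
proof -
  have N0: "0 \<le> N" using nb_nonneg[OF nb] .
  have rho0: "0 \<le> \<rho> k" if "k < H" for k using rho[of 0 k] that opnorm_nonneg by (meson order.trans zero_le)
  let ?P = "\<lambda>i. \<Sum>j\<in>{0..H}. if 1 \<le> i - j \<and> i - j \<le> H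
        then mpow (A - B ** K) j ** B ** Ms (t - 1 - int j) (i - j - 1) else 0"
  let ?f = "\<lambda>j k. \<kappa>^2 * (1-\<gamma>)^j * kB * \<rho> k"
  have "norm (LyP Ms t) \<le> (\<Sum>i\<in>{0..2*H}. opnorm (?P i) * norm (wz w \<omega> (t - 1 - int i)))"
    unfolding LyP_def by (rule norm_sum_mv) simp
  also have "\<dots> \<le> (\<Sum>i\<in>{0..2*H}. (\<Sum>j\<in>{0..H}. if 1 \<le> i - j \<and> i - j \<le> H then ?f j (i - j - 1) else 0) * N)"
  proof (rule sum_mono)
    fix i assume "i \<in> {0..2*H}"
    then have wn: "norm (wz w \<omega> (t - 1 - int i)) \<le> N" using nbD[OF nb] by simp
    have "opnorm (?P i) \<le> (\<Sum>j\<in>{0..H}. opnorm (if 1 \<le> i - j \<and> i - j \<le> H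
        then mpow (A - B ** K) j ** B ** Ms (t - 1 - int j) (i - j - 1) else 0))" by (rule opnorm_sum) simp
    also have "\<dots> \<le> (\<Sum>j\<in>{0..H}. if 1 \<le> i - j \<and> i - j \<le> H then ?f j (i - j - 1) else 0)"
    proof (rule sum_mono)
      fix j assume j: "j \<in> {0..H}"
      show "opnorm (if 1 \<le> i - j \<and> i - j \<le> H
        then mpow (A - B ** K) j ** B ** Ms (t - 1 - int j) (i - j - 1) else 0)
         \<le> (if 1 \<le> i - j \<and> i - j \<le> H then ?f j (i - j - 1) else 0)"
      proof (cases "1 \<le> i - j \<and> i - j \<le> H")
        case True
        have "opnorm (mpow (A - B ** K) j ** B ** Ms (t - 1 - int j) (i - j - 1))
            \<le> opnorm (mpow (A - B ** K) j ** B) * opnorm (Ms (t - 1 - int j) (i - j - 1))" by (rule opnorm_mult)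
        also have "\<dots> \<le> (\<kappa>^2 * (1-\<gamma>)^j * kB) * \<rho> (i - j - 1)"
          using True j by (intro mult_mono AKB rho opnorm_nonneg) (auto simp: kr0 kB0)
        finally show ?thesis using True by simp
      next
        case False
        show ?thesis unfolding if_not_P[OF False] by (simp add: opnorm_zero)
      qed
    qed
    finally have o: "opnorm (?P i) \<le> (\<Sum>j\<in>{0..H}. if 1 \<le> i - j \<and> i - j \<le> H then ?f j (i - j - 1) else 0)" .
    show "opnorm (?P i) * norm (wz w \<omega> (t - 1 - int i)) \<le> (\<Sum>j\<in>{0..H}. if 1 \<le> i - j \<and> i - j \<le> H then ?f j (i - j - 1) else 0) * N"
      by (rule mult_mono[OF o wn]) (auto intro!: sum_nonneg mult_nonneg_nonneg kr0 kB0 rho0)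
  qed
  also have "\<dots> = (\<Sum>i\<in>{0..2*H}. \<Sum>j\<in>{0..H}. if 1 \<le> i - j \<and> i - j \<le> H then ?f j (i - j - 1) else 0) * N"
    by (simp add: sum_distrib_right)
  also have "(\<Sum>i\<in>{0..2*H}. \<Sum>j\<in>{0..H}. if 1 \<le> i - j \<and> i - j \<le> H then ?f j (i - j - 1) else 0)
      = (\<Sum>j\<in>{0..H}. \<Sum>k<H. ?f j k)" by (rule dsum_reindex)
  also have "\<dots> = \<kappa>^2 * kB * (\<Sum>j<Suc H. (1-\<gamma>)^j) * (\<Sum>k<H. \<rho> k)"
    by (simp add: sum_distrib_left sum_distrib_right atLeast0AtMost lessThan_Suc_atMost[symmetric] algebra_simps)
  also have "\<dots> \<le> \<kappa>^2 * kB * (1 / \<gamma>) * (\<Sum>k<H. \<rho> k)"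
    by (intro mult_right_mono mult_left_mono geo sum_nonneg rho0) (auto simp: kB0)
  finally show ?thesis using N0 by (simp add: mult_right_mono)
qed

lemma LvP_bound:
  assumes nb: "nb t N" and rho: "\<And>k. k < H \<Longrightarrow> opnorm (Ms t k) \<le> \<rho> k"
  shows "norm (LvP Ms t) \<le> (\<Sum>k<H. \<rho> k) * N"
proof -
  have "norm (LvP Ms t) \<le> (\<Sum>i\<in>{1..H}. opnorm (Ms t (i - 1)) * norm (wz w \<omega> (t - int i)))"
    unfolding LvP_def by (rule norm_sum_mv) simp
  also have "\<dots> \<le> (\<Sum>i\<in>{1..H}. \<rho> (i - 1) * N)"
  proof (rule sum_mono)
    fix i assume i: "i \<in> {1..H}"
    have r: "opnorm (Ms t (i - 1)) \<le> \<rho> (i - 1)" using i rho by auto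
    have r0: "0 \<le> \<rho> (i - 1)" using order.trans[OF opnorm_nonneg r] .
    show "opnorm (Ms t (i - 1)) * norm (wz w \<omega> (t - int i)) \<le> \<rho> (i - 1) * N"
      using i by (intro mult_mono r nbD2[OF nb] r0) auto
  qed
  also have "\<dots> = (\<Sum>k<H. \<rho> k) * N"
    by (simp add: sum.atLeast1_atMost_eq sum_distrib_right)
  finally show ?thesis .
qed

lemma sum_rad: "(\<Sum>k<H. rad kB \<kappa> \<gamma> k) \<le> 2 * kB * \<kappa>^3 / \<gamma>"
proof -
  have "(\<Sum>k<H. rad kB \<kappa> \<gamma> k) = 2 * kB * \<kappa>^3 * (\<Sum>k<H. (1-\<gamma>)^k)"
    by (simp add: rad_def sum_distrib_left)
  also have "\<dots> \<le> 2 * kB * \<kappa>^3 * (1/\<gamma>)" by (intro mult_left_mono geo) (auto simp: kB0 k0)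
  finally show ?thesis by simp
qed

end


lemma mm_diff: "(A::real^'n::finite^'m::finite) ** ((B::real^'p::finite^'n) - C) = A ** B - A ** C"
  by (simp add: matrix_matrix_mult_def vec_eq_iff sum_subtractf algebra_simps)
lemma if_diff0: "(if c then a - b else 0) = (if c then a else 0) - (if c then b else (0::'a::group_add))"
  by simp

context sysl begin
lemma LyP_diff: "LyP Ms t - LyP Ms' t = LyP (\<lambda>s k. Ms s k - Ms' s k) t"
  unfolding LyP_def
  by (simp only: mm_diff if_diff0 sum_subtractf matrix_vector_mult_diff_rdistrib)
end

context bnd begin

abbreviation "S \<equiv> Mset H kB \<kappa> \<gamma>"

definition "q = \<kappa>^2 * kB / \<gamma>"
definition "Py = \<kappa>^2 / \<gamma> + q * (2 * kB * \<kappa>^3 / \<gamma>)"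
definition "Pv = \<kappa> * Py + 2 * kB * \<kappa>^3 / \<gamma>"

lemma q0: "0 \<le> q" unfolding q_def using kB0 g0 by simp
lemma Py0: "0 \<le> Py" unfolding Py_def using q0 kB0 k0 g0 by simp
lemma Pv0: "0 \<le> Pv" unfolding Pv_def using Py0 kB0 k0 g0 by simp

lemma S_opnorm: "M \<in> S \<Longrightarrow> k < H \<Longrightarrow> opnorm (M k) \<le> rad kB \<kappa> \<gamma> k"
  by (simp add: Mset_iff)

lemma LyP_S_bound:
  assumes nb: "nb t N" and hist: "\<And>j. j \<le> H \<Longrightarrow> Ms (t - 1 - int j) \<in> S"
  shows "norm (LyP Ms t) \<le> q * (2 * kB * \<kappa>^3 / \<gamma>) * N"
proof -
  have "norm (LyP Ms t) \<le> \<kappa>^2 * kB / \<gamma> * (\<Sum>k<H. rad kB \<kappa> \<gamma> k) * N"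
    by (rule LyP_bound[OF nb]) (use hist S_opnorm in blast)
  also have "\<dots> \<le> q * (2 * kB * \<kappa>^3 / \<gamma>) * N"
    unfolding q_def using nb_nonneg[OF nb] sum_rad kB0 g0
    by (intro mult_right_mono mult_left_mono) auto
  finally show ?thesis .
qed

lemma ysur_bound:
  assumes nb: "nb t N" and hist: "\<And>j. j \<le> H \<Longrightarrow> Ms (t - 1 - int j) \<in> S"
  shows "norm (ysur A B K H w Ms t \<omega>) \<le> Py * N"
proof -
  have "norm (ysur A B K H w Ms t \<omega>) \<le> norm (y0 t) + norm (LyP Ms t)"
    unfolding ysur_split by (rule norm_triangle_ineq)
  also have "\<dots> \<le> \<kappa>^2 / \<gamma> * N + q * (2 * kB * \<kappa>^3 / \<gamma>) * N"
    by (intro add_mono y0_bound[OF nb] LyP_S_bound[where Ms=Ms, OF nb hist])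
  finally show ?thesis by (simp add: Py_def algebra_simps)
qed

lemma Kv_bound: "norm (K *v v) \<le> \<kappa> * norm v"
  using opnorm_mult_vec[of K v] Kk by (meson mult_right_mono norm_ge_zero order.trans)

lemma vsur_bound:
  assumes nb: "nb t N" and hist: "\<And>j. j \<le> H \<Longrightarrow> Ms (t - 1 - int j) \<in> S" and cur: "Ms t \<in> S"
  shows "norm (vsur A B K H w Ms t \<omega>) \<le> Pv * N"
proof -
  have "norm (vsur A B K H w Ms t \<omega>) \<le> norm (K *v ysur A B K H w Ms t \<omega>) + norm (LvP Ms t)"
    unfolding vsur_split using norm_triangle_ineq[of "- (K *v ysur A B K H w Ms t \<omega>)" "LvP Ms t"] by simp
  also have "\<dots> \<le> \<kappa> * (Py * N) + (\<Sum>k<H. rad kB \<kappa> \<gamma> k) * N"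
    using k0 by (intro add_mono order.trans[OF Kv_bound] mult_left_mono ysur_bound[where Ms=Ms, OF nb hist]
        LvP_bound[OF nb] S_opnorm[OF cur]) auto
  also have "\<dots> \<le> \<kappa> * (Py * N) + (2 * kB * \<kappa>^3 / \<gamma>) * N"
    using nb_nonneg[OF nb] sum_rad Py0 by (intro add_mono mult_right_mono) auto
  finally show ?thesis by (simp add: Pv_def algebra_simps)
qed

lemma opnorm_Dl: "opnorm (Dl i r s k) \<le> (if k = i then 1 else 0)"
  by (simp add: Dl_def opnorm_Emat opnorm_zero)

lemma Ly_Dl_bound:
  assumes nb: "nb t N" and i: "i < H"
  shows "norm (Ly (Dl i r s) t) \<le> q * N"
proof -
  have "norm (Ly (Dl i r s) t) \<le> \<kappa>^2 * kB / \<gamma> * (\<Sum>k<H. if k = i then 1 else 0) * N"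
    unfolding Ly_def by (rule LyP_bound[OF nb opnorm_Dl])
  then show ?thesis using i by (simp add: q_def)
qed

lemma Lv_Dl_bound:
  assumes nb: "nb t N" and i: "i < H"
  shows "norm (Lv (Dl i r s) t) \<le> (\<kappa> * q + 1) * N"
proof -
  have "norm (Lv (Dl i r s) t) \<le> norm (K *v Ly (Dl i r s) t) + norm (LvP (\<lambda>_. Dl i r s) t)"
    unfolding Lv_def using norm_triangle_ineq[of "- (K *v Ly (Dl i r s) t)"] by simp
  also have "\<dots> \<le> \<kappa> * (q * N) + (\<Sum>k<H. if k = i then 1 else 0) * N"
    using k0 by (intro add_mono order.trans[OF Kv_bound] mult_left_mono Ly_Dl_bound[OF nb i]
        LvP_bound[OF nb] opnorm_Dl) auto
  finally show ?thesis using i by (simp add: algebra_simps)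
qed

lemma LyP_diff_bound:
  assumes nb: "nb t N" and d: "\<And>j k. j \<le> H \<Longrightarrow> k < H \<Longrightarrow> opnorm (Ms (t - 1 - int j) k - Ms' (t - 1 - int j) k) \<le> \<delta>"
  shows "norm (LyP Ms t - LyP Ms' t) \<le> q * H * \<delta> * N"
proof -
  have "norm (LyP Ms t - LyP Ms' t) \<le> \<kappa>^2 * kB / \<gamma> * (\<Sum>k<H. \<delta>) * N"
    unfolding LyP_diff by (rule LyP_bound[OF nb]) (rule d)
  then show ?thesis by (simp add: q_def)
qed

end


context bnd begin

definition "g1 Gc = Gc * (Py * q + Pv * (\<kappa> * q + 1))"

lemma grad_bound:
  assumes cost: "cost_assm Gc c" and X: "X \<in> S" and nb: "nb (int t) N"
  shows "sqf H (gradM H (\<lambda>M. fsur A B K H c w t M \<omega>) X)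
      \<le> real H * (real CARD('nu) * real CARD('nx)) * (g1 Gc * N^2)^2"
proof -
  have Gc0: "0 \<le> Gc" using cost unfolding cost_assm_def by simp
  have N0: "0 \<le> N" using nb_nonneg[OF nb] .
  obtain gx gu where gx: "norm gx \<le> Gc * norm (y0 (int t) + Ly X (int t))"
    and gu: "norm gu \<le> Gc * norm (- (K *v y0 (int t)) + Lv X (int t))"
    and dg: "((\<lambda>(x',u'). c t x' u') has_derivative (\<lambda>(dx,du). gx \<bullet> dx + gu \<bullet> du))
        (at (y0 (int t) + Ly X (int t), - (K *v y0 (int t)) + Lv X (int t)))"
    using grad_exists[OF cost, of t X] by blast
  have yb: "norm (y0 (int t) + Ly X (int t)) \<le> Py * N"
    using ysur_bound[where Ms="\<lambda>_. X", OF nb] X by (simp add: ysur_const)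
  have vb: "norm (- (K *v y0 (int t)) + Lv X (int t)) \<le> Pv * N"
    using vsur_bound[where Ms="\<lambda>_. X", OF nb] X by (simp add: vsur_const)
  have gxb: "norm gx \<le> Gc * Py * N" using gx yb Gc0 by (metis mult.assoc mult_left_mono order.trans)
  have gub: "norm gu \<le> Gc * Pv * N" using gu vb Gc0 by (metis mult.assoc mult_left_mono order.trans)
  have entry: "\<bar>gradM H (\<lambda>M. fsur A B K H c w t M \<omega>) X i $ r $ s\<bar> \<le> g1 Gc * N^2" if i: "i < H" for i r s
  proof -
    have "\<bar>gradM H (\<lambda>M. fsur A B K H c w t M \<omega>) X i $ r $ s\<bar>
        = \<bar>gx \<bullet> Ly (Dl i r s) (int t) + gu \<bullet> Lv (Dl i r s) (int t)\<bar>"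
      by (simp add: gradM_entry[where c=c and t=t and gx=gx and gu=gu and X=X, OF dg i])
    also have "\<dots> \<le> norm gx * norm (Ly (Dl i r s) (int t)) + norm gu * norm (Lv (Dl i r s) (int t))"
      by (rule order.trans[OF abs_triangle_ineq add_mono[OF Cauchy_Schwarz_ineq2 Cauchy_Schwarz_ineq2]])
    also have "\<dots> \<le> (Gc * Py * N) * (q * N) + (Gc * Pv * N) * ((\<kappa> * q + 1) * N)"
      by (intro add_mono mult_mono gxb gub Ly_Dl_bound[OF nb i] Lv_Dl_bound[OF nb i])
        (auto simp: Gc0 N0 Py0 Pv0)
    also have "\<dots> = g1 Gc * N^2" by (simp add: g1_def power2_eq_square algebra_simps)
    finally show ?thesis .
  qed
  have "sqf H (gradM H (\<lambda>M. fsur A B K H c w t M \<omega>) X) \<le> (\<Sum>i<H. \<Sum>r\<in>(UNIV::'nu set). \<Sum>s\<in>(UNIV::'nx set). (g1 Gc * N^2)^2)"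
    unfolding sqf_def norm_sq_mat
  proof (intro sum_mono)
    fix i r s assume "i \<in> {..<H}"
    then have "\<bar>gradM H (\<lambda>M. fsur A B K H c w t M \<omega>) X i $ r $ s\<bar> \<le> g1 Gc * N^2" using entry by simp
    then have "\<bar>gradM H (\<lambda>M. fsur A B K H c w t M \<omega>) X i $ r $ s\<bar>^2 \<le> (g1 Gc * N^2)^2"
      by (rule power_mono) simp
    then show "(gradM H (\<lambda>M. fsur A B K H c w t M \<omega>) X i $ r $ s)^2 \<le> (g1 Gc * N^2)^2" by simp
  qed
  also have "\<dots> = real H * (real CARD('nu) * real CARD('nx)) * (g1 Gc * N^2)^2" by simp
  finally show ?thesis .
qed

lemma lip_bound:
  assumes cost: "cost_assm Gc c" and nb: "nb (int t) N"
    and hist: "\<And>j. j \<le> H \<Longrightarrow> Ms (int t - 1 - int j) \<in> S" and cur: "Ms (int t) \<in> S"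
    and d: "\<And>j k. j \<le> H \<Longrightarrow> k < H \<Longrightarrow> opnorm (Ms (int t - 1 - int j) k - Ms (int t) k) \<le> \<delta>"
  shows "Fsur A B K H c w Ms t \<omega> - fsur A B K H c w t (Ms (int t)) \<omega> \<le> Gc * (Py + \<kappa> * Pv) * q * H * \<delta> * N^2"
proof -
  have Gc0: "0 \<le> Gc" using cost unfolding cost_assm_def by simp
  have N0: "0 \<le> N" using nb_nonneg[OF nb] .
  let ?y1 = "ysur A B K H w Ms (int t) \<omega>" and ?v1 = "vsur A B K H w Ms (int t) \<omega>"
  let ?y2 = "ysur A B K H w (\<lambda>_. Ms (int t)) (int t) \<omega>" and ?v2 = "vsur A B K H w (\<lambda>_. Ms (int t)) (int t) \<omega>"
  obtain gx gu where dg: "((\<lambda>(x',u'). c t x' u') has_derivative (\<lambda>(dx,du). gx \<bullet> dx + gu \<bullet> du)) (at (?y1, ?v1))"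
    and gx: "norm gx \<le> Gc * norm ?y1" and gu: "norm gu \<le> Gc * norm ?v1"
    using cost unfolding cost_assm_def by blast
  have cv: "convex_on UNIV (\<lambda>(x',u'). c t x' u')" using cost unfolding cost_assm_def by blast
  have tan: "(\<lambda>(x',u'). c t x' u') (?y1, ?v1) + (\<lambda>(dx,du). gx \<bullet> dx + gu \<bullet> du) ((?y2, ?v2) - (?y1, ?v1))
      \<le> (\<lambda>(x',u'). c t x' u') (?y2, ?v2)"
    by (rule convex_tangent[OF cv dg])
  have dy: "?y1 - ?y2 = LyP Ms (int t) - LyP (\<lambda>_. Ms (int t)) (int t)" by (simp add: ysur_split)
  have lv: "LvP Ms (int t) = LvP (\<lambda>_. Ms (int t)) (int t)" by (simp add: LvP_def)
  have dv: "?v1 - ?v2 = - (K *v (?y1 - ?y2))"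
    by (simp add: vsur_split lv matrix_vector_mult_diff_distrib)
  have Dy: "norm (?y1 - ?y2) \<le> q * H * \<delta> * N"
    unfolding dy by (rule LyP_diff_bound[OF nb]) (use d in auto)
  have "Fsur A B K H c w Ms t \<omega> - fsur A B K H c w t (Ms (int t)) \<omega> \<le> gx \<bullet> (?y1 - ?y2) + gu \<bullet> (?v1 - ?v2)"
    using tan by (simp add: Fsur_def fsur_def inner_diff_right)
  also have "\<dots> \<le> norm gx * norm (?y1 - ?y2) + norm gu * norm (?v1 - ?v2)"
    by (intro add_mono order.trans[OF abs_ge_self Cauchy_Schwarz_ineq2])
  also have "\<dots> \<le> (Gc * (Py * N)) * (q * H * \<delta> * N) + (Gc * (Pv * N)) * (\<kappa> * (q * H * \<delta> * N))"
  proof (intro add_mono mult_mono)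
    show "norm gx \<le> Gc * (Py * N)"
      using gx ysur_bound[where Ms=Ms, OF nb] hist Gc0 by (auto intro: order.trans mult_left_mono simp: algebra_simps)
    show "norm gu \<le> Gc * (Pv * N)"
      using gu vsur_bound[where Ms=Ms, OF nb] hist cur Gc0 by (auto intro: order.trans mult_left_mono simp: algebra_simps)
    show "norm (?v1 - ?v2) \<le> \<kappa> * (q * H * \<delta> * N)"
      unfolding dv norm_minus_cancel using Kv_bound k0 Dy by (meson mult_left_mono order.trans)
  qed (use Dy Gc0 N0 Py0 Pv0 in \<open>auto intro: order.trans[OF norm_ge_zero]\<close>)
  also have "\<dots> = Gc * (Py + \<kappa> * Pv) * q * H * \<delta> * N^2" by (simp add: power2_eq_square algebra_simps)
  finally show ?thesis .
qed

end


lemma frob_L2: "frob H X = L2_set (\<lambda>i. norm (X i)) {..<H}"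
  by (simp add: frob_sqf sqf_def L2_set_def)

lemma frob_nonneg: "0 \<le> frob H X" by (simp add: frob_sqf sqf_nonneg)

lemma frob_tri: "frob H (\<lambda>i. X i - Z i) \<le> frob H (\<lambda>i. X i - Y i) + frob H (\<lambda>i. Y i - Z i)"
proof -
  have "frob H (\<lambda>i. X i - Z i) \<le> L2_set (\<lambda>i. norm (X i - Y i) + norm (Y i - Z i)) {..<H}"
    unfolding frob_L2 by (rule L2_set_mono) (auto intro: norm_diff_triangle_ineq order.trans[OF _ norm_triangle_ineq])
  also have "\<dots> \<le> frob H (\<lambda>i. X i - Y i) + frob H (\<lambda>i. Y i - Z i)"
    unfolding frob_L2 by (rule L2_set_triangle_ineq)
  finally show ?thesis .
qed

lemma frob_sym: "frob H (\<lambda>i. X i - Y i) = frob H (\<lambda>i. Y i - X i)"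
  unfolding frob_L2 by (simp add: norm_minus_commute)

lemma norm_le_frob: "k < H \<Longrightarrow> norm (X k) \<le> frob H X"
proof -
  assume k: "k < H"
  have "(norm (X k))^2 \<le> sqf H X" unfolding sqf_def
    by (rule member_le_sum[where f="\<lambda>i. (norm (X i))^2"]) (use k in auto)
  then have "sqrt ((norm (X k))^2) \<le> sqrt (sqf H X)" by (rule real_sqrt_le_mono)
  then show ?thesis by (simp add: frob_sqf)
qed

lemma frob_eq_sqrt: "frob H X = sqrt (sqf H X)" by (rule frob_sqf)

locale main = bnd A B K H w \<omega> kB \<kappa> \<gamma>
  for A :: "real^'nx::finite^'nx" and B :: "real^'nu::finite^'nx" and K H w \<omega> kB \<kappa> \<gamma> +
  fixes c :: "nat \<Rightarrow> real ^'nx \<Rightarrow> real ^'nu \<Rightarrow> real" and Gc \<eta> :: real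
    and Minit :: "int \<Rightarrow> ('nx,'nu) pol" and M :: "('nx,'nu) pol"
  assumes cost: "cost_assm Gc c" and eta: "0 < \<eta>"
    and Minit: "\<And>s. - int H - 1 \<le> s \<Longrightarrow> s \<le> 0 \<Longrightarrow> Minit s \<in> S"
    and MS: "M \<in> S"
begin

abbreviation "Mt t \<equiv> ogd A B K H c w \<eta> S (Minit 0) t \<omega>"
abbreviation "Ms \<equiv> Mfull A B K H c w \<eta> S Minit \<omega>"
abbreviation "gr t \<equiv> gradM H (\<lambda>M. fsur A B K H c w t M \<omega>) (Mt t)"

lemma Gc0: "0 \<le> Gc" using cost unfolding cost_assm_def by simp

lemma Mt_S: "Mt t \<in> S"
proof (induction t)
  case 0 then show ?case using Minit[of 0] by simp
next
  case (Suc t) then show ?case by (simp add: Let_def proj_in)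
qed

lemma Mt_Suc: "Mt (Suc t) = proj H S (\<lambda>i. Mt t i - \<eta> *\<^sub>R gr t i)"
  by (simp add: Let_def)

lemma Ms_nat: "Ms (int t) = Mt t"
  by (cases "t = 0") (simp_all add: Mfull_def)

lemma Ms_S: "- int H - 1 \<le> s \<Longrightarrow> Ms s \<in> S"
proof (cases "s \<le> 0")
  case True
  assume "- int H - 1 \<le> s" then show ?thesis using True Minit by (simp add: Mfull_def)
next
  case False
  then have "s = int (nat s)" by simp
  then show ?thesis using Mt_S[of "nat s"] Ms_nat[of "nat s"] by metis
qed

lemma ipH_comm: "ipH H X Y = ipH H Y X" unfolding ipH_def by (simp add: inner_commute)

lemma ogd_step:
  "ipH H (gr t) (\<lambda>i. Mt t i - M i) \<le> (sqf H (\<lambda>i. Mt t i - M i) - sqf H (\<lambda>i. Mt (Suc t) i - M i)) / (2 * \<eta>)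
      + \<eta> / 2 * sqf H (gr t)"
proof -
  let ?D = "\<lambda>i. Mt t i - M i" and ?g = "gr t"
  have "sqf H (\<lambda>i. Mt (Suc t) i - M i) \<le> sqf H (\<lambda>i. (Mt t i - \<eta> *\<^sub>R ?g i) - M i)"
    unfolding Mt_Suc by (rule proj_nonexp[OF MS])
  also have "sqf H (\<lambda>i. (Mt t i - \<eta> *\<^sub>R ?g i) - M i) = sqf H (\<lambda>i. ?D i + (- \<eta>) *\<^sub>R ?g i)"
    by (simp add: algebra_simps)
  also have "\<dots> = sqf H ?D + 2 * ipH H ?D (\<lambda>i. (- \<eta>) *\<^sub>R ?g i) + sqf H (\<lambda>i. (- \<eta>) *\<^sub>R ?g i)"
    by (rule sqf_add)
  also have "ipH H ?D (\<lambda>i. (- \<eta>) *\<^sub>R ?g i) = - \<eta> * ipH H ?g ?D"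
    unfolding ipH_def by (simp add: sum_distrib_left inner_commute sum_negf)
  also have "sqf H (\<lambda>i. (- \<eta>) *\<^sub>R ?g i) = \<eta>^2 * sqf H ?g"
    unfolding sqf_def by (simp add: sum_distrib_left power_mult_distrib)
  finally have "2 * \<eta> * ipH H ?g ?D \<le> sqf H ?D - sqf H (\<lambda>i. Mt (Suc t) i - M i) + \<eta>^2 * sqf H ?g"
    by simp
  then show ?thesis using eta by (simp add: field_simps power2_eq_square)
qed

lemma move_step: "frob H (\<lambda>i. Mt (Suc t) i - Mt t i) \<le> \<eta> * frob H (gr t)"
proof -
  have "sqf H (\<lambda>i. Mt (Suc t) i - Mt t i) \<le> sqf H (\<lambda>i. (Mt t i - \<eta> *\<^sub>R gr t i) - Mt t i)"
    unfolding Mt_Suc by (rule proj_nonexp[OF Mt_S])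
  also have "\<dots> = \<eta>^2 * sqf H (gr t)"
    unfolding sqf_def by (simp add: sum_distrib_left power_mult_distrib)
  finally have "sqrt (sqf H (\<lambda>i. Mt (Suc t) i - Mt t i)) \<le> sqrt (\<eta>^2 * sqf H (gr t))"
    by (rule real_sqrt_le_mono)
  then show ?thesis using eta by (simp add: frob_sqf real_sqrt_mult)
qed

lemma f_step: "fsur A B K H c w t (Mt t) \<omega> - fsur A B K H c w t M \<omega> \<le> ipH H (gr t) (\<lambda>i. Mt t i - M i)"
proof -
  obtain gx gu where dg: "((\<lambda>(x',u'). c t x' u') has_derivative (\<lambda>(dx,du). gx \<bullet> dx + gu \<bullet> du))
        (at (y0 (int t) + Ly (Mt t) (int t), - (K *v y0 (int t)) + Lv (Mt t) (int t)))"
    using grad_exists[OF cost, of t "Mt t"] by blast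
  show ?thesis unfolding ipH_def by (rule grad_ineq[OF cost dg])
qed

lemma ogd_regret:
  "(\<Sum>t<T. fsur A B K H c w t (Mt t) \<omega> - fsur A B K H c w t M \<omega>)
     \<le> sqf H (\<lambda>i. Mt 0 i - M i) / (2 * \<eta>) + \<eta> / 2 * (\<Sum>t<T. sqf H (gr t))"
proof -
  let ?d = "\<lambda>t. sqf H (\<lambda>i. Mt t i - M i)"
  have "(\<Sum>t<T. fsur A B K H c w t (Mt t) \<omega> - fsur A B K H c w t M \<omega>)
      \<le> (\<Sum>t<T. (?d t - ?d (Suc t)) / (2 * \<eta>) + \<eta> / 2 * sqf H (gr t))"
    by (intro sum_mono order.trans[OF f_step ogd_step])
  also have "\<dots> = (\<Sum>t<T. ?d t - ?d (Suc t)) / (2 * \<eta>) + \<eta> / 2 * (\<Sum>t<T. sqf H (gr t))"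
    by (simp add: sum.distrib sum_divide_distrib sum_distrib_left)
  also have "(\<Sum>t<T. ?d t - ?d (Suc t)) = ?d 0 - ?d T"
    by (rule sum_lessThan_telescope')
  also have "(?d 0 - ?d T) / (2 * \<eta>) \<le> ?d 0 / (2 * \<eta>)"
    using eta sqf_nonneg[of H "\<lambda>i. Mt T i - M i"] by (simp add: divide_right_mono)
  finally show ?thesis by simp
qed

end


context main begin

definition V :: "nat \<Rightarrow> real" where
  "V t = Max ((\<lambda>k. norm (wz w \<omega> (int t - int k))) ` {1..3*H+2})"

lemma V_ge: "k \<in> {1..3*H+2} \<Longrightarrow> norm (wz w \<omega> (int t - int k)) \<le> V t"
  unfolding V_def by (rule Max_ge) auto

lemma V_nonneg: "0 \<le> V t"
proof -
  have "1 \<in> {1..3*H+2}" by simp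
  from order.trans[OF norm_ge_zero V_ge[OF this]] show ?thesis .
qed

lemma V_in: "\<exists>k\<in>{1..3*H+2}. V t = norm (wz w \<omega> (int t - int k))"
proof -
  have "V t \<in> (\<lambda>k. norm (wz w \<omega> (int t - int k))) ` {1..3*H+2}"
    unfolding V_def by (rule Max_in) auto
  then show ?thesis by auto
qed

lemma V4: "(V t)^4 \<le> (\<Sum>k\<in>{1..3*H+2}. (norm (wz w \<omega> (int t - int k)))^4)"
proof -
  obtain k where k: "k \<in> {1..3*H+2}" "V t = norm (wz w \<omega> (int t - int k))" using V_in by blast
  show ?thesis unfolding k(2)
    by (rule member_le_sum[where f="\<lambda>k. (norm (wz w \<omega> (int t - int k)))^4"]) (use k in auto)
qed

lemma nb_V_win: "u \<le> t \<Longrightarrow> t \<le> u + H + 1 \<Longrightarrow> nb (int u) (V t)"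
  unfolding nb_def
proof
  fix k assume ut: "u \<le> t" "t \<le> u + H + 1" and k: "k \<in> {1..2*H+1}"
  have e: "int u - int k = int t - int (t - u + k)" using ut by simp
  show "norm (wz w \<omega> (int u - int k)) \<le> V t" unfolding e by (rule V_ge) (use ut k in auto)
qed

lemma nb_V_self: "nb (int t) (V t)" by (rule nb_V_win) auto

definition "G = sqrt (real H * (real CARD('nu) * real CARD('nx))) * g1 Gc"

lemma g10: "0 \<le> g1 Gc" unfolding g1_def using Gc0 Py0 Pv0 q0 k0 by simp
lemma G0: "0 \<le> G" unfolding G_def using g10 by simp

lemma gr_sqf: "nb (int u) N \<Longrightarrow> sqf H (gr u) \<le> G^2 * N^4"
proof -
  assume nb: "nb (int u) N"
  have "sqf H (gr u) \<le> real H * (real CARD('nu) * real CARD('nx)) * (g1 Gc * N^2)^2"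
    by (rule grad_bound[OF cost Mt_S nb])
  also have "\<dots> = G^2 * N^4" unfolding G_def by (simp add: power_mult_distrib)
  finally show ?thesis .
qed

lemma gr_frob: "nb (int u) N \<Longrightarrow> frob H (gr u) \<le> G * N^2"
proof -
  assume nb: "nb (int u) N"
  have "frob H (gr u) \<le> sqrt (G^2 * N^4)" unfolding frob_sqf by (rule real_sqrt_le_mono[OF gr_sqf[OF nb]])
  also have "G^2 * N^4 = (G * N^2)^2" by (simp add: power_mult_distrib power_mult[symmetric])
  also have "sqrt ((G * N^2)^2) = G * N^2" using G0 by simp
  finally show ?thesis .
qed

definition "Dsq = 16 * kB^2 * \<kappa>^6 * real CARD('nx) / \<gamma>"

lemma diam_sqf:
  fixes P Q :: "('nx,'nu) pol"
  assumes "P \<in> S" "Q \<in> S"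
  shows "sqf H (\<lambda>i. P i - Q i) \<le> Dsq"
proof -
  let ?g = "1 - (1 - \<gamma>)^2"
  have a: "0 \<le> (1-\<gamma>)^2" by simp
  have "(1-\<gamma>) * (1-\<gamma>) \<le> (1-\<gamma>) * 1" using g0 g1' by (intro mult_left_mono) auto
  then have b: "(1-\<gamma>)^2 \<le> 1 - \<gamma>" by (simp add: power2_eq_square)
  have gg: "0 < ?g" "?g \<le> 1" "\<gamma> \<le> ?g" using a b g0 by auto
  have "sqf H (\<lambda>i. P i - Q i) \<le> (\<Sum>i<H. (2 * sqrt (real CARD('nx)) * rad kB \<kappa> \<gamma> i)^2)"
    unfolding sqf_def
  proof (intro sum_mono power_mono)
    fix i assume "i \<in> {..<H}"
    then have i: "i < H" by simp
    have "norm (P i - Q i) \<le> norm (P i) + norm (Q i)" by (rule norm_triangle_ineq4)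
    also have "\<dots> \<le> sqrt (real CARD('nx)) * opnorm (P i) + sqrt (real CARD('nx)) * opnorm (Q i)"
      using norm_le_sqrt_opnorm[of "P i"] norm_le_sqrt_opnorm[of "Q i"] by simp
    also have "\<dots> \<le> sqrt (real CARD('nx)) * rad kB \<kappa> \<gamma> i + sqrt (real CARD('nx)) * rad kB \<kappa> \<gamma> i"
      using assms i by (intro add_mono mult_left_mono S_opnorm) auto
    finally show "norm (P i - Q i) \<le> 2 * sqrt (real CARD('nx)) * rad kB \<kappa> \<gamma> i" by simp
  qed simp
  also have "\<dots> = 16 * kB^2 * \<kappa>^6 * real CARD('nx) * (\<Sum>i<H. ((1 - \<gamma>)^2)^i)"
    by (simp add: rad_def sum_distrib_left power_mult_distrib power_mult[symmetric] mult.commute algebra_simps)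
  also have "\<dots> \<le> 16 * kB^2 * \<kappa>^6 * real CARD('nx) * (1 / ?g)"
  proof (intro mult_left_mono)
    show "(\<Sum>i<H. ((1 - \<gamma>)^2)^i) \<le> 1 / ?g" using geo_le[OF gg(1,2), of H] by simp
  qed simp
  also have "\<dots> \<le> 16 * kB^2 * \<kappa>^6 * real CARD('nx) * (1 / \<gamma>)"
    using gg g0 by (intro mult_left_mono divide_left_mono) auto
  finally show ?thesis by (simp add: Dsq_def)
qed

definition "Dm = sqrt Dsq"

lemma diam_frob: "(P :: ('nx,'nu) pol) \<in> S \<Longrightarrow> Q \<in> S \<Longrightarrow> frob H (\<lambda>i. P i - Q i) \<le> Dm"
  unfolding frob_sqf Dm_def by (rule real_sqrt_le_mono[OF diam_sqf])

lemma Dm0: "0 \<le> Dm" using diam_frob[OF MS MS] frob_nonneg by (meson order.trans)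

lemma chain: "a \<le> b \<Longrightarrow> frob H (\<lambda>i. Mt a i - Mt b i) \<le> \<eta> * (\<Sum>u\<in>{a..<b}. frob H (gr u))"
proof (induction b)
  case 0 then show ?case by (simp add: frob_sqf sqf_def)
next
  case (Suc b)
  show ?case
  proof (cases "a = Suc b")
    case True then show ?thesis by (simp add: frob_sqf sqf_def)
  next
    case False
    then have ab: "a \<le> b" using Suc by simp
    have "frob H (\<lambda>i. Mt a i - Mt (Suc b) i) \<le> frob H (\<lambda>i. Mt a i - Mt b i) + frob H (\<lambda>i. Mt b i - Mt (Suc b) i)"
      by (rule frob_tri)
    also have "frob H (\<lambda>i. Mt b i - Mt (Suc b) i) \<le> \<eta> * frob H (gr b)"
      using move_step[of b] frob_sym[of H "Mt b" "Mt (Suc b)"] by simp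
    also have "frob H (\<lambda>i. Mt a i - Mt b i) \<le> \<eta> * (\<Sum>u\<in>{a..<b}. frob H (gr u))" by (rule Suc.IH[OF ab])
    finally show ?thesis using ab by (simp add: distrib_left)
  qed
qed

definition "dlt t = (if t \<le> H then Dm else 0) + \<eta> * (H + 1) * G * (V t)^2"

lemma win_sum: "\<eta> * (\<Sum>u\<in>{t - (H+1)..<t}. frob H (gr u)) \<le> \<eta> * (H + 1) * G * (V t)^2"
proof -
  have "(\<Sum>u\<in>{t - (H+1)..<t}. frob H (gr u)) \<le> (\<Sum>u\<in>{t - (H+1)..<t}. G * (V t)^2)"
    by (intro sum_mono gr_frob nb_V_win) auto
  also have "\<dots> = real (card {t - (H+1)..<t}) * (G * (V t)^2)" by simp
  also have "\<dots> \<le> real (H + 1) * (G * (V t)^2)"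
    by (intro mult_right_mono) (auto simp: G0)
  finally have "\<eta> * (\<Sum>u\<in>{t - (H+1)..<t}. frob H (gr u)) \<le> \<eta> * (real (H + 1) * (G * (V t)^2))"
    by (rule mult_left_mono) (use eta in auto)
  then show ?thesis by (simp add: algebra_simps)
qed

lemma dlt_bound:
  assumes j: "j \<le> H" and k: "k < H"
  shows "opnorm (Ms (int t - 1 - int j) k - Ms (int t) k) \<le> dlt t"
proof -
  have gsum0: "0 \<le> (\<Sum>u\<in>{t - (H+1)..<t}. frob H (gr u))" by (intro sum_nonneg frob_nonneg)
  have "opnorm (Ms (int t - 1 - int j) k - Ms (int t) k) \<le> norm (Ms (int t - 1 - int j) k - Ms (int t) k)"
    by (rule opnorm_le_norm)
  also have "\<dots> \<le> frob H (\<lambda>i. Ms (int t - 1 - int j) i - Ms (int t) i)"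
    using norm_le_frob[OF k, of "\<lambda>i. Ms (int t - 1 - int j) i - Ms (int t) i"] by simp
  also have "\<dots> \<le> (if t \<le> H then Dm else 0) + \<eta> * (\<Sum>u\<in>{t - (H+1)..<t}. frob H (gr u))"
  proof (cases "j < t")
    case True
    have e: "int t - 1 - int j = int (t - 1 - j)" using True by simp
    have "frob H (\<lambda>i. Ms (int t - 1 - int j) i - Ms (int t) i) \<le> \<eta> * (\<Sum>u\<in>{t - 1 - j..<t}. frob H (gr u))"
      unfolding e Ms_nat by (rule chain) simp
    also have "\<dots> \<le> \<eta> * (\<Sum>u\<in>{t - (H+1)..<t}. frob H (gr u))"
      using eta j by (intro mult_left_mono sum_mono2 frob_nonneg) auto
    also have "\<dots> \<le> (if t \<le> H then Dm else 0) + \<eta> * (\<Sum>u\<in>{t - (H+1)..<t}. frob H (gr u))"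
      using Dm0 by simp
    finally show ?thesis .
  next
    case False
    then have tH: "t \<le> H" and w0: "t - (H+1) = 0" using j by auto
    have sS: "Ms (int t - 1 - int j) \<in> S" using j by (intro Ms_S) auto
    have "frob H (\<lambda>i. Ms (int t - 1 - int j) i - Ms (int t) i)
        \<le> frob H (\<lambda>i. Ms (int t - 1 - int j) i - Mt 0 i) + frob H (\<lambda>i. Mt 0 i - Mt t i)"
      unfolding Ms_nat by (rule frob_tri)
    also have "\<dots> \<le> Dm + \<eta> * (\<Sum>u\<in>{0..<t}. frob H (gr u))"
      by (intro add_mono diam_frob[OF sS Mt_S] chain) simp
    finally show ?thesis using tH w0 by simp
  qed
  also have "\<dots> \<le> dlt t" unfolding dlt_def using win_sum by simp
  finally show ?thesis .
qed

definition "c1 = Gc * (Py + \<kappa> * Pv) * q * H"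

lemma c10: "0 \<le> c1" unfolding c1_def using Gc0 Py0 Pv0 q0 k0 by simp
lemma dlt0: "0 \<le> dlt t" unfolding dlt_def using Dm0 eta G0 by simp

lemma lip_t: "Fsur A B K H c w Ms t \<omega> - fsur A B K H c w t (Mt t) \<omega> \<le> c1 * dlt t * (V t)^2"
proof -
  have "Fsur A B K H c w Ms t \<omega> - fsur A B K H c w t (Ms (int t)) \<omega> \<le> Gc * (Py + \<kappa> * Pv) * q * H * dlt t * (V t)^2"
    by (rule lip_bound[OF cost nb_V_self _ _ dlt_bound]) (auto intro: Ms_S)
  then show ?thesis by (simp add: Ms_nat c1_def)
qed

lemma regret_det:
  "(\<Sum>t<T. Fsur A B K H c w Ms t \<omega>) - (\<Sum>t<T. fsur A B K H c w t M \<omega>)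
     \<le> Dsq / (2 * \<eta>) + \<eta> / 2 * (\<Sum>t<T. G^2 * (V t)^4) + (\<Sum>t<T. c1 * dlt t * (V t)^2)"
proof -
  have "(\<Sum>t<T. Fsur A B K H c w Ms t \<omega>) - (\<Sum>t<T. fsur A B K H c w t M \<omega>)
      = (\<Sum>t<T. Fsur A B K H c w Ms t \<omega> - fsur A B K H c w t (Mt t) \<omega>)
        + (\<Sum>t<T. fsur A B K H c w t (Mt t) \<omega> - fsur A B K H c w t M \<omega>)"
    by (simp add: sum_subtractf)
  also have "\<dots> \<le> (\<Sum>t<T. c1 * dlt t * (V t)^2)
      + (sqf H (\<lambda>i. Mt 0 i - M i) / (2 * \<eta>) + \<eta> / 2 * (\<Sum>t<T. sqf H (gr t)))"
    by (intro add_mono sum_mono lip_t ogd_regret)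
  also have "\<dots> \<le> (\<Sum>t<T. c1 * dlt t * (V t)^2) + (Dsq / (2 * \<eta>) + \<eta> / 2 * (\<Sum>t<T. G^2 * (V t)^4))"
    using eta c10 dlt0 by (intro add_mono divide_right_mono mult_left_mono sum_mono diam_sqf[OF Mt_S MS] gr_sqf nb_V_self) auto
  finally show ?thesis by simp
qed

end


context main begin

lemma shift_sum:
  assumes k: "1 \<le> k" and F: "finite F" and m: "\<And>t. t \<in> F \<Longrightarrow> k \<le> t \<Longrightarrow> t - k < m"
  shows "(\<Sum>t\<in>F. (norm (wz w \<omega> (int t - int k)))^4) \<le> (\<Sum>s<m. (norm (w s \<omega>))^4)"
proof -
  let ?\<phi> = "\<lambda>s. (norm (w s \<omega>))^4"
  have "(\<Sum>t\<in>F. (norm (wz w \<omega> (int t - int k)))^4) = (\<Sum>t\<in>F. if t \<in> {k..} then ?\<phi> (t - k) else 0)"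
    by (intro sum.cong refl) (auto simp: wz_def nat_diff_distrib)
  also have "\<dots> = (\<Sum>t\<in>F \<inter> {k..}. ?\<phi> (t - k))" by (simp only: sum.inter_restrict[OF F])
  also have "\<dots> = (\<Sum>s\<in>(\<lambda>t. t - k) ` (F \<inter> {k..}). ?\<phi> s)"
    by (subst sum.reindex) (auto simp: inj_on_def)
  also have "\<dots> \<le> (\<Sum>s<m. ?\<phi> s)"
    by (intro sum_mono2) (use m in auto)
  finally show ?thesis .
qed

lemma sumV4:
  "(\<Sum>t<T. (V t)^4) \<le> real (3*H+2) * (\<Sum>s<T. (norm (w s \<omega>))^4)"
proof -
  have "(\<Sum>t<T. (V t)^4) \<le> (\<Sum>t<T. \<Sum>k\<in>{1..3*H+2}. (norm (wz w \<omega> (int t - int k)))^4)"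
    by (intro sum_mono V4)
  also have "\<dots> = (\<Sum>k\<in>{1..3*H+2}. \<Sum>t<T. (norm (wz w \<omega> (int t - int k)))^4)" by (rule sum.swap)
  also have "\<dots> \<le> (\<Sum>k\<in>{1..3*H+2}. \<Sum>s<T. (norm (w s \<omega>))^4)"
    by (intro sum_mono shift_sum) auto
  finally show ?thesis by simp
qed

lemma sumV4_early:
  "(\<Sum>t\<in>{t. t < T \<and> t \<le> H}. (V t)^4) \<le> real (3*H+2) * (\<Sum>s<H. (norm (w s \<omega>))^4)"
proof -
  have fin: "finite {t. t < T \<and> t \<le> H}" by simp
  have "(\<Sum>t\<in>{t. t < T \<and> t \<le> H}. (V t)^4) \<le> (\<Sum>t\<in>{t. t < T \<and> t \<le> H}. \<Sum>k\<in>{1..3*H+2}. (norm (wz w \<omega> (int t - int k)))^4)"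
    by (intro sum_mono V4)
  also have "\<dots> = (\<Sum>k\<in>{1..3*H+2}. \<Sum>t\<in>{t. t < T \<and> t \<le> H}. (norm (wz w \<omega> (int t - int k)))^4)" by (rule sum.swap)
  also have "\<dots> \<le> (\<Sum>k\<in>{1..3*H+2}. \<Sum>s<H. (norm (w s \<omega>))^4)"
    by (intro sum_mono shift_sum fin) auto
  finally show ?thesis by simp
qed

lemma sq_young: "0 < \<nu> \<Longrightarrow> x^2 \<le> x^4 / (2 * \<nu>) + \<nu> / 2" for x :: real
proof -
  assume nu: "0 < \<nu>"
  have "0 \<le> (x^2 - \<nu>)^2" by simp
  then have "2 * \<nu> * x^2 \<le> x^4 + \<nu>^2" by (simp add: power2_eq_square algebra_simps power4_eq_xxxx)
  then show ?thesis using nu by (simp add: field_simps power2_eq_square)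
qed

definition "Lam = (G^2 / 2 + c1 * (H + 1) * G) * real (3*H+2)"

lemma regret_Z:
  assumes nu: "0 < \<nu>"
  shows "(\<Sum>t<T. Fsur A B K H c w Ms t \<omega>) - (\<Sum>t<T. fsur A B K H c w t M \<omega>)
     \<le> Dsq / (2 * \<eta>) + \<eta> * Lam * (\<Sum>s<T. (norm (w s \<omega>))^4)
       + c1 * Dm * (real (3*H+2) * (\<Sum>s<H. (norm (w s \<omega>))^4) / (2 * \<nu>) + real (H + 1) * \<nu> / 2)"
proof -
  let ?Z = "\<Sum>s<T. (norm (w s \<omega>))^4" and ?Z2 = "\<Sum>s<H. (norm (w s \<omega>))^4"
  have e1: "(\<Sum>t<T. c1 * dlt t * (V t)^2)
      = c1 * Dm * (\<Sum>t<T. if t \<le> H then (V t)^2 else 0) + \<eta> * (c1 * (H + 1) * G) * (\<Sum>t<T. (V t)^4)"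
  proof -
    have pt: "c1 * dlt t * (V t)^2 = c1 * Dm * (if t \<le> H then (V t)^2 else 0) + \<eta> * (c1 * (H + 1) * G) * (V t)^4" for t
      unfolding dlt_def by (cases "t \<le> H") (simp_all add: algebra_simps power2_eq_square power4_eq_xxxx)
    show ?thesis by (simp only: pt sum.distrib sum_distrib_left[symmetric])
  qed
  have e2: "(\<Sum>t<T. if t \<le> H then (V t)^2 else 0) = (\<Sum>t\<in>{t. t < T \<and> t \<le> H}. (V t)^2)"
  proof -
    have "(\<Sum>t<T. if t \<le> H then (V t)^2 else 0) = (\<Sum>t\<in>{..<T} \<inter> {t. t \<le> H}. (V t)^2)"
      by (simp only: sum.inter_restrict[OF finite_lessThan] mem_Collect_eq)
    also have "{..<T} \<inter> {t. t \<le> H} = {t. t < T \<and> t \<le> H}" by auto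
    finally show ?thesis .
  qed
  have e3: "(\<Sum>t\<in>{t. t < T \<and> t \<le> H}. (V t)^2) \<le> (\<Sum>t\<in>{t. t < T \<and> t \<le> H}. (V t)^4 / (2 * \<nu>) + \<nu> / 2)"
    by (intro sum_mono sq_young nu)
  also have "\<dots> = (\<Sum>t\<in>{t. t < T \<and> t \<le> H}. (V t)^4) / (2 * \<nu>) + real (card {t. t < T \<and> t \<le> H}) * \<nu> / 2"
    by (simp add: sum.distrib sum_divide_distrib)
  also have "\<dots> \<le> real (3*H+2) * ?Z2 / (2 * \<nu>) + real (H + 1) * \<nu> / 2"
  proof (intro add_mono divide_right_mono)
    show "(\<Sum>t\<in>{t. t < T \<and> t \<le> H}. (V t)^4) \<le> real (3*H+2) * ?Z2" by (rule sumV4_early)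
    have "{t. t < T \<and> t \<le> H} \<subseteq> {..H}" by auto
    then have "card {t. t < T \<and> t \<le> H} \<le> card {..H}" by (intro card_mono) auto
    then show "real (card {t. t < T \<and> t \<le> H}) * \<nu> \<le> real (H + 1) * \<nu>" using nu by simp
  qed (use nu in auto)
  finally have e4: "(\<Sum>t<T. if t \<le> H then (V t)^2 else 0) \<le> real (3*H+2) * ?Z2 / (2 * \<nu>) + real (H + 1) * \<nu> / 2"
    unfolding e2 .
  have "(\<Sum>t<T. Fsur A B K H c w Ms t \<omega>) - (\<Sum>t<T. fsur A B K H c w t M \<omega>)
     \<le> Dsq / (2 * \<eta>) + \<eta> / 2 * (\<Sum>t<T. G^2 * (V t)^4) + (\<Sum>t<T. c1 * dlt t * (V t)^2)"
    by (rule regret_det)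
  also have "\<dots> = Dsq / (2 * \<eta>) + \<eta> * (G^2 / 2 + c1 * (H + 1) * G) * (\<Sum>t<T. (V t)^4)
      + c1 * Dm * (\<Sum>t<T. if t \<le> H then (V t)^2 else 0)"
  proof -
    have a: "(\<Sum>t<T. G^2 * (V t)^4) = G^2 * (\<Sum>t<T. (V t)^4)" by (simp add: sum_distrib_left)
    have b: "\<And>a b. Dsq / (2 * \<eta>) + \<eta> / 2 * (G^2 * a) + (c1 * Dm * b + \<eta> * (c1 * (H + 1) * G) * a)
       = Dsq / (2 * \<eta>) + \<eta> * (G^2 / 2 + c1 * (H + 1) * G) * a + c1 * Dm * b" by (simp add: algebra_simps)
    show ?thesis unfolding e1 a by (rule b)
  qed
  also have "\<dots> \<le> Dsq / (2 * \<eta>) + \<eta> * (G^2 / 2 + c1 * (H + 1) * G) * (real (3*H+2) * ?Z)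
      + c1 * Dm * (real (3*H+2) * ?Z2 / (2 * \<nu>) + real (H + 1) * \<nu> / 2)"
    using eta G0 c10 Dm0 by (intro add_mono mult_left_mono sumV4 e4 order.refl mult_nonneg_nonneg add_nonneg_nonneg) auto
  also have "\<dots> = Dsq / (2 * \<eta>) + \<eta> * Lam * ?Z + c1 * Dm * (real (3*H+2) * ?Z2 / (2 * \<nu>) + real (H + 1) * \<nu> / 2)"
    by (simp add: Lam_def mult.assoc)
  finally show ?thesis .
qed

end


lemma markov_real:
  assumes P: "prob_space \<Omega>" and f: "f \<in> borel_measurable \<Omega>" and f0: "\<And>x. 0 \<le> f x"
    and I: "(\<integral>\<^sup>+x. ennreal (f x) \<partial>\<Omega>) \<le> ennreal m" and a: "0 < a" and m: "0 \<le> m"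
  shows "measure \<Omega> {x\<in>space \<Omega>. a < f x} \<le> m / a"
proof -
  interpret prob_space \<Omega> by (rule P)
  have sub: "{x\<in>space \<Omega>. a < f x} \<subseteq> {x\<in>space \<Omega>. 1 \<le> ennreal (1/a) * ennreal (f x)}"
  proof
    fix x assume "x \<in> {x\<in>space \<Omega>. a < f x}"
    then have x: "x \<in> space \<Omega>" "a < f x" by auto
    have "ennreal (1/a) * ennreal (f x) = ennreal (f x / a)" using a f0[of x] by (simp add: ennreal_mult'' divide_inverse mult.commute)
    moreover have "1 \<le> f x / a" using x a by simp
    ultimately show "x \<in> {x\<in>space \<Omega>. 1 \<le> ennreal (1/a) * ennreal (f x)}" using x by simp
  qed
  have "emeasure \<Omega> {x\<in>space \<Omega>. a < f x} \<le> emeasure \<Omega> {x\<in>space \<Omega>. 1 \<le> ennreal (1/a) * ennreal (f x)}"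
    by (rule emeasure_mono[OF sub]) (use f in measurable)
  also have "\<dots> \<le> ennreal (1/a) * (\<integral>\<^sup>+x\<in>space \<Omega>. ennreal (f x) \<partial>\<Omega>)"
    by (rule nn_integral_Markov_inequality) (use f in measurable)
  also have "\<dots> = ennreal (1/a) * (\<integral>\<^sup>+x. ennreal (f x) \<partial>\<Omega>)" by (simp add: nn_set_integral_space)
  also have "\<dots> \<le> ennreal (1/a) * ennreal m" by (rule mult_left_mono[OF I]) simp
  also have "\<dots> = ennreal (m / a)" using a m by (simp add: ennreal_mult'' divide_inverse mult.commute)
  finally have "ennreal (measure \<Omega> {x\<in>space \<Omega>. a < f x}) \<le> ennreal (m / a)"
    by (simp add: emeasure_eq_measure)
  then show ?thesis using a m by (simp add: ennreal_le_iff)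
qed

lemma nn_sum_bound:
  assumes w_meas: "\<And>t. w t \<in> borel_measurable \<Omega>"
    and A2: "\<And>t. (\<integral>\<^sup>+\<omega>. ennreal (norm (w t \<omega>) ^ 4) \<partial>\<Omega>) \<le> ennreal (\<sigma>w ^ 4)"
  shows "(\<integral>\<^sup>+\<omega>. ennreal (\<Sum>s<m. norm (w s \<omega>) ^ 4) \<partial>\<Omega>) \<le> ennreal (real m * \<sigma>w ^ 4)"
proof -
  have [measurable]: "\<And>t. w t \<in> borel_measurable \<Omega>" by (rule w_meas)
  have "(\<integral>\<^sup>+\<omega>. ennreal (\<Sum>s<m. norm (w s \<omega>) ^ 4) \<partial>\<Omega>) = (\<integral>\<^sup>+\<omega>. (\<Sum>s<m. ennreal (norm (w s \<omega>) ^ 4)) \<partial>\<Omega>)"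
    by (simp add: sum_ennreal)
  also have "\<dots> = (\<Sum>s<m. \<integral>\<^sup>+\<omega>. ennreal (norm (w s \<omega>) ^ 4) \<partial>\<Omega>)"
    by (rule nn_integral_sum) measurable
  also have "\<dots> \<le> (\<Sum>s<m. ennreal (\<sigma>w ^ 4))" by (intro sum_mono A2)
  also have "\<dots> = ennreal (real m * \<sigma>w ^ 4)"
    by (simp add: ennreal_mult ennreal_of_nat_eq_real_of_nat zero_le_even_power)
  finally show ?thesis .
qed


lemma ge1_mult: "1 \<le> a \<Longrightarrow> 1 \<le> b \<Longrightarrow> 1 \<le> (a::real) * b"
  using mult_mono[of 1 a 1 b] by simp

lemma le_mult_ge1: "0 \<le> x \<Longrightarrow> 1 \<le> y \<Longrightarrow> x \<le> x * (y::real)"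
  using mult_left_mono[of 1 y x] by simp

context main begin

definition "u = 1 / \<gamma>"
definition "W = Gc * kB^3 * \<kappa>^9 * u^3"
definition "nn = real (max CARD('nx) CARD('nu))"

lemma Gc1: "1 \<le> Gc" using cost unfolding cost_assm_def by simp
lemma u1: "1 \<le> u" unfolding u_def using g0 g1' by simp
lemma gu: "\<gamma> = 1 / u" unfolding u_def using g0 by simp
lemma nn1: "1 \<le> nn" unfolding nn_def by (simp add: le_max_iff_disj)

lemma q_u: "q = \<kappa>^2 * kB * u" unfolding q_def u_def by simp
lemma Py_u: "Py = \<kappa>^2 * u + 2 * kB^2 * \<kappa>^5 * u^2"
  unfolding Py_def q_u u_def by (simp add: power2_eq_square power3_eq_cube algebra_simps)
    (simp add: power_def)
lemma Pv_u: "Pv = \<kappa> * Py + 2 * kB * \<kappa>^3 * u" unfolding Pv_def u_def by simp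

lemma k2: "1 \<le> \<kappa>^2" "1 \<le> \<kappa>^3" using k1 by (simp_all add: one_le_power)
lemma kB2: "1 \<le> kB^2" "1 \<le> kB^3" using kB1 by (simp_all add: one_le_power)

lemma Py_le: "Py \<le> 3 * kB^2 * \<kappa>^5 * u^2"
proof -
  have "\<kappa>^2 * u \<le> (\<kappa>^2 * u) * (kB^2 * \<kappa>^3 * u)"
    by (rule le_mult_ge1) (use k0 u1 k2 kB2 in \<open>auto intro!: ge1_mult\<close>)
  also have "\<dots> = kB^2 * \<kappa>^5 * u^2" by (simp add: power2_eq_square power3_eq_cube algebra_simps) (simp add: power_def)
  finally show ?thesis unfolding Py_u by simp
qed

lemma Pv_le: "Pv \<le> 5 * kB^2 * \<kappa>^6 * u^2"
proof -
  have a: "\<kappa> * Py \<le> \<kappa> * (3 * kB^2 * \<kappa>^5 * u^2)" by (rule mult_left_mono[OF Py_le k0])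
  have b: "2 * kB * \<kappa>^3 * u \<le> (2 * kB * \<kappa>^3 * u) * (kB * \<kappa>^3 * u)"
    by (rule le_mult_ge1) (use k0 kB0 u1 k2 kB1 in \<open>auto intro!: ge1_mult\<close>)
  have "\<kappa> * (3 * kB^2 * \<kappa>^5 * u^2) + (2 * kB * \<kappa>^3 * u) * (kB * \<kappa>^3 * u) = 5 * kB^2 * \<kappa>^6 * u^2"
    by (simp add: power2_eq_square power3_eq_cube algebra_simps) (simp add: power_def)
  then show ?thesis unfolding Pv_u using a b by linarith
qed

lemma W_u: "W = Gc * kB^3 * \<kappa>^9 * u^3" by (rule W_def)
lemma W1: "1 \<le> W" unfolding W_def using Gc1 kB2 k1 u1 by (auto intro!: ge1_mult one_le_power)

lemma g1_le: "g1 Gc \<le> 13 * W"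
proof -
  have a: "Py * q \<le> 3 * kB^2 * \<kappa>^5 * u^2 * (\<kappa>^2 * kB * u)"
    unfolding q_u by (rule mult_right_mono[OF Py_le]) (use k0 kB0 u1 in auto)
  have a2: "3 * kB^2 * \<kappa>^5 * u^2 * (\<kappa>^2 * kB * u) \<le> (3 * kB^2 * \<kappa>^5 * u^2 * (\<kappa>^2 * kB * u)) * \<kappa>^2"
    by (rule le_mult_ge1) (use k0 kB0 u1 k2 in auto)
  have c: "\<kappa> * q + 1 \<le> 2 * \<kappa>^3 * kB * u"
  proof -
    have "1 \<le> \<kappa>^3 * kB * u" using k2 kB1 u1 by (auto intro!: ge1_mult)
    moreover have "\<kappa> * q = \<kappa>^3 * kB * u" unfolding q_u by (simp add: power2_eq_square power3_eq_cube)
    moreover have "2 * \<kappa>^3 * kB * u = 2 * (\<kappa>^3 * kB * u)" by simp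
    ultimately show ?thesis by linarith
  qed
  have b: "Pv * (\<kappa> * q + 1) \<le> 5 * kB^2 * \<kappa>^6 * u^2 * (2 * \<kappa>^3 * kB * u)"
    by (rule mult_mono[OF Pv_le c]) (use Pv0 q0 k0 in auto)
  have e: "(3 * kB^2 * \<kappa>^5 * u^2 * (\<kappa>^2 * kB * u)) * \<kappa>^2 + 5 * kB^2 * \<kappa>^6 * u^2 * (2 * \<kappa>^3 * kB * u)
      = 13 * (kB^3 * \<kappa>^9 * u^3)"
    by (simp add: power2_eq_square power3_eq_cube algebra_simps) (simp add: power_def)
  have "Py * q + Pv * (\<kappa> * q + 1) \<le> 13 * (kB^3 * \<kappa>^9 * u^3)" using a a2 b e by linarith
  then have "Gc * (Py * q + Pv * (\<kappa> * q + 1)) \<le> Gc * (13 * (kB^3 * \<kappa>^9 * u^3))"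
    by (rule mult_left_mono) (use Gc1 in auto)
  then show ?thesis unfolding g1_def W_def by (simp add: algebra_simps)
qed

lemma c1_le: "c1 \<le> 8 * H * W"
proof -
  have a: "\<kappa> * Pv \<le> \<kappa> * (5 * kB^2 * \<kappa>^6 * u^2)" by (rule mult_left_mono[OF Pv_le k0])
  have a2: "3 * kB^2 * \<kappa>^5 * u^2 \<le> (3 * kB^2 * \<kappa>^5 * u^2) * \<kappa>^2"
    by (rule le_mult_ge1) (use k0 kB0 u1 k2 in auto)
  have e: "(3 * kB^2 * \<kappa>^5 * u^2) * \<kappa>^2 + \<kappa> * (5 * kB^2 * \<kappa>^6 * u^2) = 8 * kB^2 * \<kappa>^7 * u^2"
    by (simp add: power2_eq_square power3_eq_cube algebra_simps) (simp add: power_def)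
  have s: "Py + \<kappa> * Pv \<le> 8 * kB^2 * \<kappa>^7 * u^2" using Py_le a a2 e by linarith
  have "Gc * (Py + \<kappa> * Pv) * q * H \<le> Gc * (8 * kB^2 * \<kappa>^7 * u^2) * (\<kappa>^2 * kB * u) * H"
    unfolding q_u using Gc1 s k0 kB0 u1 by (intro mult_right_mono mult_left_mono) auto
  also have "\<dots> = 8 * H * W" unfolding W_def by (simp add: power2_eq_square power3_eq_cube algebra_simps) (simp add: power_def)
  finally show ?thesis unfolding c1_def .
qed

lemma G_le: "G \<le> 13 * nn * H * W"
proof -
  have "real H * (real CARD('nu) * real CARD('nx)) \<le> (real H * nn)^2"
  proof -
    have c1: "real CARD('nu) \<le> nn" "real CARD('nx) \<le> nn" unfolding nn_def by auto
    have c2: "real CARD('nu) * real CARD('nx) \<le> nn * nn" using c1 nn1 by (intro mult_mono) auto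
    have c3: "real H \<le> real H * real H" by (cases H) auto
    have "real H * (real CARD('nu) * real CARD('nx)) \<le> (real H * real H) * (nn * nn)"
      by (rule mult_mono[OF c3 c2]) auto
    then show ?thesis by (simp add: power2_eq_square algebra_simps)
  qed
  then have "sqrt (real H * (real CARD('nu) * real CARD('nx))) \<le> real H * nn"
    using nn1 by (metis real_sqrt_le_mono real_sqrt_abs abs_of_nonneg mult_nonneg_nonneg of_nat_0_le_iff order_trans zero_le_one)
  then have "G \<le> real H * nn * (13 * W)"
    unfolding G_def using g1_le g10 nn1 by (intro mult_mono) auto
  then show ?thesis by (simp add: algebra_simps)
qed

lemma Dsq_le: "Dsq \<le> 16 * nn * W^2 / u^5"
proof -
  have "kB^2 * \<kappa>^6 * u \<le> (kB^2 * \<kappa>^6 * u) * (Gc^2 * kB^4 * \<kappa>^12)"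
    by (rule le_mult_ge1) (use kB0 k0 u1 Gc1 kB1 k1 in \<open>auto intro!: ge1_mult one_le_power\<close>)
  also have "\<dots> = W^2 / u^5" unfolding W_def using u1
    by (simp add: power2_eq_square power3_eq_cube field_simps) (simp add: power_def)
  finally have a: "kB^2 * \<kappa>^6 * u \<le> W^2 / u^5" .
  have "Dsq = 16 * real CARD('nx) * (kB^2 * \<kappa>^6 * u)" unfolding Dsq_def u_def by simp
  also have "\<dots> \<le> 16 * nn * (W^2 / u^5)"
    using a kB0 k0 u1 by (intro mult_mono mult_left_mono) (auto simp: nn_def)
  finally show ?thesis by simp
qed

end

context main begin

lemma c1_0: "0 \<le> c1" by (rule c10)

lemma Lam_le:
  assumes H1: "1 \<le> H"
  shows "Lam \<le> 1465 * (nn^2 * real H^4 * W^2)"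
proof -
  define X where "X = nn^2 * real H^3 * W^2"
  have h1: "1 \<le> real H" using H1 by simp
  have W0: "0 \<le> W" using W1 by simp
  have X0: "0 \<le> X" unfolding X_def using W0 by simp
  have Gsq: "G^2 \<le> (13 * nn * H * W)^2" using G_le G0 by (intro power_mono) auto
  have cG: "c1 * (real H + 1) * G \<le> (8 * H * W) * (2 * real H) * (13 * nn * H * W)"
  proof (rule mult_mono)
    show "c1 * (real H + 1) \<le> 8 * H * W * (2 * real H)"
      using c1_le c10 h1 by (intro mult_mono) auto
  qed (use G_le G0 h1 W0 nn1 in auto)
  have e1: "(13 * nn * H * W)^2 \<le> 169 * X"
  proof -
    have "(13 * nn * H * W)^2 = 169 * (nn^2 * real H^2 * W^2)" by (simp add: power_mult_distrib)
    also have "real H^2 \<le> real H^3" using h1 by (intro power_increasing) auto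
    then have "nn^2 * real H^2 * W^2 \<le> X" unfolding X_def using W0 by (intro mult_right_mono mult_left_mono) auto
    finally show ?thesis by simp
  qed
  have e2: "(8 * H * W) * (2 * real H) * (13 * nn * H * W) \<le> 208 * X"
  proof -
    have "(8 * H * W) * (2 * real H) * (13 * nn * H * W) = 208 * (nn * real H^3 * W^2)"
      by (simp add: power2_eq_square power3_eq_cube algebra_simps)
    also have "nn * real H^3 * W^2 \<le> X" unfolding X_def using nn1 W0 h1
      by (intro mult_right_mono) (auto simp: power2_eq_square)
    finally show ?thesis by simp
  qed
  have s0: "G^2 / 2 + c1 * (real H + 1) * G \<le> 293 * X" using Gsq cG e1 e2 X0 by linarith
  have s: "G^2 / 2 + c1 * real (H + 1) * G \<le> 293 * X" using s0 by (simp add: add.commute)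
  have t: "real (3*H+2) \<le> 5 * real H" using h1 by simp
  have nn0: "0 \<le> G^2 / 2 + c1 * real (H + 1) * G" using G0 c10 by simp
  have "Lam \<le> (293 * X) * (5 * real H)"
    unfolding Lam_def by (rule mult_mono[OF s t]) (use X0 in auto)
  also have "\<dots> = 1465 * (nn^2 * real H^4 * W^2)" unfolding X_def by (simp add: power_def algebra_simps)
  finally show ?thesis .
qed

lemma I1:
  assumes H1: "1 \<le> H" and L1: "1 \<le> L" and HL: "real H \<le> 3 * L * u"
  shows "2 * Lam \<le> (65640 * nn^2 * W^2 * u^2)^3 * L^6"
proof -
  have W0: "0 \<le> W" using W1 by simp
  have h4: "real H^4 \<le> (3 * L * u)^4" using HL by (intro power_mono) auto
  have "2 * Lam \<le> 2 * (1465 * (nn^2 * real H^4 * W^2))" by (rule mult_left_mono[OF Lam_le[OF H1]]) simp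
  also have "\<dots> \<le> 2 * (1465 * (nn^2 * (3 * L * u)^4 * W^2))"
    using h4 by (intro mult_left_mono mult_right_mono) auto
  also have "\<dots> = 237330 * (nn^2 * W^2 * u^4 * L^4)" by (simp add: power_mult_distrib algebra_simps)
  also have "\<dots> \<le> 65640^3 * (nn^2 * W^2 * u^4 * L^4)" by (intro mult_right_mono) auto
  also have "\<dots> \<le> 65640^3 * ((nn^2 * W^2 * u^4 * L^4) * (nn^4 * W^4 * u^2 * L^2))"
    using nn1 W1 u1 L1 by (intro mult_left_mono le_mult_ge1) (auto intro!: ge1_mult one_le_power)
  also have "\<dots> = (65640 * nn^2 * W^2 * u^2)^3 * L^6" by (simp add: power_mult_distrib power_def algebra_simps)
  finally show ?thesis .
qed

lemma I2:
  assumes H1: "1 \<le> H" and L1: "1 \<le> L" and HL: "real H \<le> 3 * L * u" and LT: "L^3 \<le> 27 * T"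
  shows "8 * real H * real (3*H+2) * real (H+1) * c1^2 * Dsq \<le> (65640 * nn^2 * W^2 * u^2)^2 * T * L^2"
proof -
  have h1: "1 \<le> real H" using H1 by simp
  have W0: "0 \<le> W" using W1 by simp
  have u0: "0 < u" using u1 by simp
  have T0: "0 \<le> T"
  proof -
    have "1 \<le> L^3" using L1 by (rule one_le_power)
    then show ?thesis using LT by linarith
  qed
  have c1sq: "c1^2 \<le> (8 * H * W)^2" using c1_le c10 by (intro power_mono) auto
  have Dsq0: "0 \<le> Dsq" unfolding Dsq_def using g0 by simp
  have "8 * real H * real (3*H+2) * real (H+1) * c1^2 * Dsq \<le> 8 * real H * (5 * real H) * (2 * real H) * (8 * H * W)^2 * (16 * nn * W^2 / u^5)"
    using h1 c1sq Dsq_le Dsq0 by (intro mult_mono) auto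
  also have "\<dots> = 81920 * nn * W^4 * (real H^5 / u^5)" by (simp add: power_def algebra_simps)
  also have "\<dots> \<le> 81920 * nn * W^4 * (243 * L^5)"
  proof (intro mult_left_mono)
    have "real H^5 \<le> (3 * L * u)^5" using HL by (intro power_mono) auto
    then have "real H^5 / u^5 \<le> (3 * L * u)^5 / u^5" using u0 by (intro divide_right_mono) auto
    also have "\<dots> = 243 * L^5" using u0 by (simp add: power_mult_distrib)
    finally show "real H^5 / u^5 \<le> 243 * L^5" .
  qed (use nn1 W0 in auto)
  also have "\<dots> = 19906560 * nn * W^4 * L^2 * L^3" by (simp add: power_def algebra_simps)
  also have "\<dots> \<le> 19906560 * nn * W^4 * L^2 * (27 * T)"
    using LT nn1 W0 by (intro mult_left_mono) auto
  also have "\<dots> = 537477120 * (nn * W^4 * L^2 * T)" by simp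
  also have "\<dots> \<le> 65640^2 * (nn * W^4 * L^2 * T)"
    using nn1 W0 T0 by (intro mult_right_mono) auto
  also have "\<dots> \<le> 65640^2 * ((nn * W^4 * L^2 * T) * (nn^3 * u^4))"
    using nn1 W0 u1 L1 T0 by (intro mult_left_mono le_mult_ge1) (auto intro!: ge1_mult one_le_power mult_nonneg_nonneg)
  also have "\<dots> = (65640 * nn^2 * W^2 * u^2)^2 * T * L^2" by (simp add: power_def algebra_simps)
  finally show ?thesis .
qed

end

lemma prob_arith:
  fixes s4 s14 C K0 K1 Lam L T J :: real
  assumes "0 \<le> s4" "0 \<le> s14" "s4 \<le> s14^3" "s4 \<le> s14^2" "0 < C" "0 \<le> K1" "K1 \<le> K0"
    "K0 * s14 < C" "2 * Lam \<le> K1^3 * L^6" "0 < Lam" "0 < L" "0 < T" "0 \<le> J" "J \<le> K1^2 * T * L^2"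
  shows "s4 * Lam / (C^3 * L^6) + J * s4 / (2 * C^2 * T * L^2) \<le> K0 * s14 / C"
proof -
  define x where "x = K0 * s14 / C"
  have K00: "0 \<le> K0" using assms by linarith
  have x0: "0 \<le> x" and x1: "x < 1" using assms K00 unfolding x_def by (auto simp: field_simps)
  have y: "K1 * s14 / C \<le> x" unfolding x_def using assms by (intro divide_right_mono mult_right_mono) auto
  have y0: "0 \<le> K1 * s14 / C" using assms by simp
  have t1: "s4 * Lam / (C^3 * L^6) \<le> x / 2"
  proof -
    have "s4 * Lam / (C^3 * L^6) \<le> s14^3 * Lam / (C^3 * L^6)"
      using assms by (intro divide_right_mono mult_right_mono) auto
    also have "\<dots> \<le> s14^3 * (K1^3 * L^6 / 2) / (C^3 * L^6)"
      using assms by (intro divide_right_mono mult_left_mono) auto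
    also have "\<dots> = (K1 * s14 / C)^3 / 2" using assms by (simp add: field_simps power_mult_distrib)
    also have "\<dots> \<le> x^3 / 2" using y y0 by (intro divide_right_mono power_mono) auto
    also have "\<dots> \<le> x / 2"
    proof -
      have "x^3 \<le> x^1" using x0 x1 by (intro power_decreasing) auto
      then show ?thesis by simp
    qed
    finally show ?thesis .
  qed
  have t2: "J * s4 / (2 * C^2 * T * L^2) \<le> x / 2"
  proof -
    have "J * s4 / (2 * C^2 * T * L^2) \<le> (K1^2 * T * L^2) * s14^2 / (2 * C^2 * T * L^2)"
      using assms by (intro divide_right_mono mult_mono) auto
    also have "\<dots> = (K1 * s14 / C)^2 / 2" using assms by (simp add: field_simps power_mult_distrib)
    also have "\<dots> \<le> x^2 / 2" using y y0 by (intro divide_right_mono power_mono) auto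
    also have "\<dots> \<le> x / 2"
    proof -
      have "x^2 \<le> x^1" using x0 x1 by (intro power_decreasing) auto
      then show ?thesis by simp
    qed
    finally show ?thesis .
  qed
  show ?thesis using t1 t2 unfolding x_def by linarith
qed

context main begin

lemma Py_pos: "0 < Py" unfolding Py_u using k1 u1 kB1 by (auto intro!: add_pos_nonneg)
lemma q_pos: "0 < q" unfolding q_u using k1 u1 kB1 by simp
lemma g1_pos: "0 < g1 Gc" unfolding g1_def using Gc1 Py_pos q_pos Pv0 k0 by (auto intro!: mult_pos_pos add_pos_nonneg)
lemma G_pos: "1 \<le> H \<Longrightarrow> 0 < G" unfolding G_def using g1_pos by simp
lemma c1_pos: "1 \<le> H \<Longrightarrow> 0 < c1" unfolding c1_def using Gc1 Py_pos q_pos Pv0 k0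
  by (auto intro!: mult_pos_pos add_pos_nonneg)
lemma Lam_pos: "1 \<le> H \<Longrightarrow> 0 < Lam" unfolding Lam_def using G_pos c1_pos
  by (auto intro!: mult_pos_pos add_pos_nonneg)
lemma Dsq_pos: "0 < Dsq" unfolding Dsq_def using kB1 k1 g0 by simp
lemma Dm_pos: "0 < Dm" unfolding Dm_def using Dsq_pos by simp

end


lemma regret_arith:
  fixes R Dsq \<eta> Lam Z c1 Dm Z2 \<nu> a b C T L h3 h1 D Gc \<gamma> :: real
  assumes R: "R \<le> Dsq / (2 * \<eta>) + \<eta> * Lam * Z + c1 * Dm * (h3 * Z2 / (2 * \<nu>) + h1 * \<nu> / 2)"
    and Za: "Z \<le> a" and Zb: "Z2 \<le> b" and Z0: "0 \<le> Z" and Z20: "0 \<le> Z2"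
    and eta: "\<eta> = 1 / (sqrt T * L^3)" and a: "a = C^3 * T * L^6 / Lam"
    and b: "b = C^2 * T * L^2 / (4 * c1^2 * Dsq * h3 * h1)" and nu: "\<nu> = C * sqrt T * L / (2 * c1 * Dm * h1)"
    and Dm: "Dm^2 = Dsq" and pos: "0 < Lam" "0 < c1" "0 < Dm" "0 < h3" "0 < h1" "0 < C" "0 < T" "0 < L"
    and DD: "Dsq \<le> D^2" and Gc: "1 \<le> Gc" and g: "0 < \<gamma>" "\<gamma> < 1"
  shows "R \<le> (2 * sqrt 3 * Gc * C^3 / sqrt \<gamma> + D^2/2) * sqrt T * L^3 + C/2 * sqrt T * L"
proof -
  define sT where "sT = sqrt T"
  have sT: "0 < sT" "sT * sT = T" "sqrt T = sT" using pos unfolding sT_def by auto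
  have Dsq0: "0 < Dsq" using Dm pos by (metis zero_less_power)
  have eta0: "0 < \<eta>" unfolding eta using sT pos by simp
  have s1: "Dsq / (2 * \<eta>) \<le> D^2 / 2 * sT * L^3"
  proof -
    have "Dsq / (2 * \<eta>) = Dsq / 2 * sT * L^3" unfolding eta using sT pos by (simp add: field_simps)
    also have "\<dots> \<le> D^2 / 2 * sT * L^3" using DD sT pos by (intro mult_right_mono divide_right_mono) auto
    finally show ?thesis .
  qed
  have s2: "\<eta> * Lam * Z \<le> C^3 * sT * L^3"
  proof -
    have "\<eta> * Lam * Z \<le> \<eta> * Lam * a" using Za eta0 pos by (intro mult_left_mono) auto
    also have "\<dots> = C^3 * sT * L^3"
    proof -
      have "L^6 = L^3 * L^3" by (simp add: power_add[symmetric])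
      then show ?thesis unfolding eta a using sT pos by (simp add: field_simps)
    qed
    finally show ?thesis .
  qed
  have s3: "C^3 * sT * L^3 \<le> (2 * sqrt 3 * Gc * C^3 / sqrt \<gamma>) * sT * L^3"
  proof -
    have a1: "2 * 1 * 1 \<le> 2 * sqrt 3 * Gc" using Gc by (intro mult_mono) auto
    have a2: "1 \<le> 1 / sqrt \<gamma>" using g by simp
    have "1 * 1 \<le> (2 * sqrt 3 * Gc) * (1 / sqrt \<gamma>)" using a1 a2 Gc by (intro mult_mono) auto
    then have a3: "1 \<le> 2 * sqrt 3 * Gc / sqrt \<gamma>" by simp
    have "C^3 * sT * L^3 \<le> (C^3 * sT * L^3) * (2 * sqrt 3 * Gc / sqrt \<gamma>)"
      using sT pos a3 by (intro le_mult_ge1) auto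
    then show ?thesis by (simp add: algebra_simps)
  qed
  have nu0: "0 < \<nu>" unfolding nu using sT pos by simp
  have s4: "c1 * Dm * (h3 * Z2 / (2 * \<nu>)) \<le> C * sT * L / 4"
  proof -
    have "c1 * Dm * (h3 * Z2 / (2 * \<nu>)) \<le> c1 * Dm * (h3 * b / (2 * \<nu>))"
      using Zb pos nu0 by (intro mult_left_mono divide_right_mono) auto
    also have "\<dots> = C * sT * L / 4" unfolding b nu using sT pos Dm[symmetric]
      by (simp add: field_simps power2_eq_square)
    finally show ?thesis .
  qed
  have s5: "c1 * Dm * (h1 * \<nu> / 2) = C * sT * L / 4" unfolding nu using sT pos by (simp add: field_simps)
  have "R \<le> D^2 / 2 * sT * L^3 + (2 * sqrt 3 * Gc * C^3 / sqrt \<gamma>) * sT * L^3 + (C * sT * L / 4 + C * sT * L / 4)"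
  proof -
    have R': "R \<le> Dsq / (2 * \<eta>) + \<eta> * Lam * Z + (c1 * Dm * (h3 * Z2 / (2 * \<nu>)) + c1 * Dm * (h1 * \<nu> / 2))"
      using R by (simp only: distrib_left)
    show ?thesis using R' s1 s2 s3 s4 s5 by linarith
  qed
  also have "\<dots> = (2 * sqrt 3 * Gc * C^3 / sqrt \<gamma> + D^2/2) * sqrt T * L^3 + C/2 * sqrt T * L"
    using sT by (simp add: algebra_simps)
  finally show ?thesis .
qed


theorem proposition3:
  fixes A :: "real ^'nx::finite ^'nx" and B :: "real ^'nu::finite ^'nx" and K :: "real ^'nx ^'nu"
    and c :: "nat \<Rightarrow> real ^'nx \<Rightarrow> real ^'nu \<Rightarrow> real"
    and \<Omega> :: "'w measure" and w :: "nat \<Rightarrow> 'w \<Rightarrow> real ^'nx"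
    and Minit :: "int \<Rightarrow> ('nx,'nu) pol" and M :: "('nx,'nu) pol"
    and \<kappa> \<gamma> Gc \<sigma>w C :: real and T :: nat
  assumes "prob_space \<Omega>"
    and A1: "cost_assm Gc c"
    and w_meas: "\<And>t. w t \<in> borel_measurable \<Omega>"
    and A2: "\<And>t. (\<integral>\<^sup>+\<omega>. ennreal (norm (w t \<omega>) ^ 4) \<partial>\<Omega>) \<le> ennreal (\<sigma>w ^ 4)"
    and "0 \<le> \<sigma>w"
    and "0 < \<gamma>" "\<gamma> < 1"
    and stab: "strongly_stable \<kappa> \<gamma> A B K"
    and "T \<ge> 3" and "C > 0"
    and Minit: "\<And>s. - int (nat \<lceil>2 / \<gamma> * ln (real T)\<rceil>) - 1 \<le> s \<Longrightarrow> s \<le> 0 \<Longrightarrow>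
                 Minit s \<in> Mset (nat \<lceil>2 / \<gamma> * ln (real T)\<rceil>) (kappaB B) \<kappa> \<gamma>"
    and M: "M \<in> Mset (nat \<lceil>2 / \<gamma> * ln (real T)\<rceil>) (kappaB B) \<kappa> \<gamma>"
  shows "let H = nat \<lceil>2 / \<gamma> * ln (real T)\<rceil>;
             \<eta> = 1 / (sqrt (real T) * ln (real T) ^ 3);
             S = Mset H (kappaB B) \<kappa> \<gamma>;
             n = max CARD('nx) CARD('nu);
             D = 4 * kappaB B * \<kappa>^3 * sqrt (real n) / \<gamma>;
             \<sigma>14 = max \<sigma>w (\<sigma>w ^ 4);
             Ms = Mfull A B K H c w \<eta> S Minit
         in \<exists>E \<in> sets \<Omega>.
              prob_space.prob \<Omega> E \<ge> 1 - 65640 * \<sigma>14 * real n ^ 2 * Gc^2 * kappaB B ^ 6 * \<kappa> ^ 18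
                                       / (C * \<gamma> ^ 8 * (1 - \<gamma>) ^ 4)
            \<and> (\<forall>\<omega>\<in>E.
                 (\<Sum>t<T. Fsur A B K H c w (\<lambda>s. Ms \<omega> s) t \<omega>) - (\<Sum>t<T. fsur A B K H c w t M \<omega>)
                 \<le> (2 * sqrt 3 * Gc * C ^ 3 / sqrt \<gamma> + D^2 / 2) * sqrt (real T) * ln (real T) ^ 3
                   + C / 2 * sqrt (real T) * ln (real T))"
proof -
  note P = assms(1) and A1 = assms(2) and wm = assms(3) and A2 = assms(4) and sig0 = assms(5)
    and g0 = assms(6) and g1 = assms(7) and stab = assms(8) and T3 = assms(9) and C0 = assms(10)
    and Minit = assms(11) and MS = assms(12)
  define L where "L = ln (real T)"
  define H where "H = nat \<lceil>2 / \<gamma> * L\<rceil>"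
  define \<eta> where "\<eta> = 1 / (sqrt (real T) * L ^ 3)"
  define kB where "kB = kappaB B"
  define n where "n = max CARD('nx) CARD('nu)"
  define D where "D = 4 * kB * \<kappa>^3 * sqrt (real n) / \<gamma>"
  define \<sigma>14 where "\<sigma>14 = max \<sigma>w (\<sigma>w ^ 4)"
  have kB1: "1 \<le> kB" and Bk: "opnorm B \<le> kB" unfolding kB_def kappaB_def by auto
  have k1: "1 \<le> \<kappa>" and Kk: "opnorm K \<le> \<kappa>" and pw: "\<And>j. opnorm (mpow (A - B ** K) j) \<le> \<kappa>^2 * (1 - \<gamma>)^j"
    using stab_bounds[OF stab g1] by auto
  have T0: "0 < real T" using T3 by simp
  have L1: "1 \<le> L"
  proof -
    have "ln (exp 1) \<le> ln (3::real)" using exp_le by (subst ln_le_cancel_iff) auto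
    also have "\<dots> \<le> ln (real T)" using T3 by (subst ln_le_cancel_iff) auto
    finally show ?thesis unfolding L_def by simp
  qed
  have LT: "L^3 \<le> 27 * real T"
  proof -
    have r0: "0 < root 3 (real T)" using T0 by simp
    have "L / 3 = ln (root 3 (real T))" unfolding L_def using T0 by (simp add: ln_root)
    also have "\<dots> \<le> root 3 (real T) - 1" using r0 by (rule ln_le_minus_one)
    finally have "L \<le> 3 * root 3 (real T)" by simp
    then have "L^3 \<le> (3 * root 3 (real T))^3" using L1 by (intro power_mono) auto
    also have "\<dots> = 27 * real T" using T0 by (simp add: power_mult_distrib real_root_pow_pos)
    finally show ?thesis .
  qed
  have HL: "real H \<le> 3 * L * (1 / \<gamma>)" and H1: "1 \<le> H"
  proof -
    have x0: "0 < 2 / \<gamma> * L" using g0 L1 by simp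
    have l1: "1 \<le> L / \<gamma>" using L1 g0 g1 by (simp add: field_simps)
    have l2: "3 * L * (1 / \<gamma>) = 2 / \<gamma> * L + L / \<gamma>" by (simp add: field_simps)
    have "real H = of_int \<lceil>2 / \<gamma> * L\<rceil>" unfolding H_def using x0 by simp
    also have "\<dots> \<le> 2 / \<gamma> * L + 1" by (rule of_int_ceiling_le_add_one)
    also have "\<dots> \<le> 3 * L * (1 / \<gamma>)" using l1 l2 by linarith
    finally show "real H \<le> 3 * L * (1 / \<gamma>)" .
    have "1 \<le> \<lceil>2 / \<gamma> * L\<rceil>" using x0 by simp
    then have "nat 1 \<le> nat \<lceil>2 / \<gamma> * L\<rceil>" by (rule nat_mono)
    then show "1 \<le> H" unfolding H_def by simp
  qed
  have eta0: "0 < \<eta>" unfolding \<eta>_def using T0 L1 by simp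
  have mainI: "main A B K H kB \<kappa> \<gamma> c Gc \<eta> Minit M"
  proof (unfold_locales)
    show "0 \<le> kB" using kB1 by simp
    show "0 \<le> \<kappa>" using k1 by simp
    show "\<gamma> \<le> 1" using g1 by simp
  qed (use g0 g1 kB1 Bk k1 Kk pw A1 eta0 in \<open>auto intro: Minit[unfolded L_def[symmetric] H_def[symmetric] kB_def[symmetric]]
      MS[unfolded L_def[symmetric] H_def[symmetric] kB_def[symmetric]]\<close>)
  interpret m0: main A B K H w undefined kB \<kappa> \<gamma> c Gc \<eta> Minit M by (rule mainI)
  define K0 where "K0 = 65640 * real n^2 * Gc^2 * kB^6 * \<kappa>^18 / (\<gamma>^8 * (1-\<gamma>)^4)"
  have QK: "65640 * \<sigma>14 * real n ^ 2 * Gc^2 * kB ^ 6 * \<kappa> ^ 18 / (C * \<gamma> ^ 8 * (1 - \<gamma>) ^ 4) = K0 * \<sigma>14 / C"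
    unfolding K0_def using g0 g1 C0 by (simp add: field_simps)
  define K1 where "K1 = 65640 * m0.nn^2 * m0.W^2 * m0.u^2"
  have K10: "0 \<le> K1" unfolding K1_def by simp
  have K1K0: "K1 \<le> K0"
  proof -
    have r4: "0 < (1 - \<gamma>)^4" "(1 - \<gamma>)^4 \<le> 1" using g0 g1 by (auto intro: power_le_one)
    have "K0 = K1 / (1 - \<gamma>)^4"
      unfolding K0_def K1_def m0.W_def m0.u_def m0.nn_def n_def using g0
      by (simp add: field_simps power_mult_distrib)
    also have "K1 / (1 - \<gamma>)^4 \<ge> K1 / 1" using r4 K10 by (intro divide_left_mono) auto
    finally show ?thesis by simp
  qed
  have claim: "\<exists>E\<in>sets \<Omega>. 1 - K0 * \<sigma>14 / C \<le> measure \<Omega> E \<and> (\<forall>\<omega>\<in>E.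
     (\<Sum>t<T. Fsur A B K H c w (Mfull A B K H c w \<eta> (Mset H kB \<kappa> \<gamma>) Minit \<omega>) t \<omega>) - (\<Sum>t<T. fsur A B K H c w t M \<omega>)
       \<le> (2 * sqrt 3 * Gc * C ^ 3 / sqrt \<gamma> + D^2 / 2) * sqrt (real T) * L ^ 3 + C / 2 * sqrt (real T) * L)"
  proof (cases "K0 * \<sigma>14 < C")
    case False
    then have "1 \<le> K0 * \<sigma>14 / C" using C0 by simp
    then have "1 - K0 * \<sigma>14 / C \<le> measure \<Omega> {}" by simp
    moreover have "{} \<in> sets \<Omega>" by simp
    ultimately show ?thesis by blast
  next
    case True
    interpret pr: prob_space \<Omega> by (rule P)
    have [measurable]: "\<And>t. w t \<in> borel_measurable \<Omega>" by (rule wm)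
    define Z where "Z = (\<lambda>\<omega>. \<Sum>s<T. norm (w s \<omega>)^4)"
    define Z2 where "Z2 = (\<lambda>\<omega>. \<Sum>s<H. norm (w s \<omega>)^4)"
    have Zm[measurable]: "Z \<in> borel_measurable \<Omega>" unfolding Z_def by measurable
    have Z2m[measurable]: "Z2 \<in> borel_measurable \<Omega>" unfolding Z2_def by measurable
    have Z0: "0 \<le> Z \<omega>" "0 \<le> Z2 \<omega>" for \<omega> unfolding Z_def Z2_def by (auto intro: sum_nonneg)
    have Lam0: "0 < m0.Lam" by (rule m0.Lam_pos[OF H1])
    have c10: "0 < m0.c1" by (rule m0.c1_pos[OF H1])
    have Dm0: "0 < m0.Dm" by (rule m0.Dm_pos)
    have Dsq0: "0 < m0.Dsq" by (rule m0.Dsq_pos)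
    have L0: "0 < L" using L1 by simp
    define a where "a = C^3 * real T * L^6 / m0.Lam"
    define b where "b = C^2 * real T * L^2 / (4 * m0.c1^2 * m0.Dsq * real (3*H+2) * real (H+1))"
    define \<nu> where "\<nu> = C * sqrt (real T) * L / (2 * m0.c1 * m0.Dm * real (H+1))"
    define J where "J = 8 * real H * real (3*H+2) * real (H+1) * m0.c1^2 * m0.Dsq"
    define E where "E = {\<omega>\<in>space \<Omega>. Z \<omega> \<le> a \<and> Z2 \<omega> \<le> b}"
    have a0: "0 < a" unfolding a_def using C0 T0 L0 Lam0 by simp
    have b0: "0 < b" unfolding b_def using C0 T0 L0 c10 Dsq0 by simp
    have nu0: "0 < \<nu>" unfolding \<nu>_def using C0 T0 L0 c10 Dm0 by simp
    have Esets: "E \<in> sets \<Omega>" unfolding E_def by measurable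
    have p1: "measure \<Omega> {\<omega>\<in>space \<Omega>. a < Z \<omega>} \<le> real T * \<sigma>w^4 / a"
      by (rule markov_real[OF P Zm Z0(1) _ a0]) (use nn_sum_bound[OF wm A2, where m=T] sig0 in \<open>auto simp: Z_def\<close>)
    have p2: "measure \<Omega> {\<omega>\<in>space \<Omega>. b < Z2 \<omega>} \<le> real H * \<sigma>w^4 / b"
      by (rule markov_real[OF P Z2m Z0(2) _ b0]) (use nn_sum_bound[OF wm A2, where m=H] sig0 in \<open>auto simp: Z2_def\<close>)
    have cmp: "space \<Omega> - E = {\<omega>\<in>space \<Omega>. a < Z \<omega>} \<union> {\<omega>\<in>space \<Omega>. b < Z2 \<omega>}"
      unfolding E_def by auto
    have "measure \<Omega> (space \<Omega> - E) \<le> measure \<Omega> {\<omega>\<in>space \<Omega>. a < Z \<omega>} + measure \<Omega> {\<omega>\<in>space \<Omega>. b < Z2 \<omega>}"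
      unfolding cmp by (rule measure_Un_le) measurable
    then have pE: "1 - (real T * \<sigma>w^4 / a + real H * \<sigma>w^4 / b) \<le> measure \<Omega> E"
      using pr.prob_compl[OF Esets] p1 p2 by linarith
    have e1: "real T * \<sigma>w^4 / a = \<sigma>w^4 * m0.Lam / (C^3 * L^6)"
      unfolding a_def using C0 T0 L0 Lam0 by (simp add: field_simps)
    have e2: "real H * \<sigma>w^4 / b = J * \<sigma>w^4 / (2 * C^2 * real T * L^2)"
      unfolding b_def J_def using C0 T0 L0 c10 Dsq0 by (simp add: field_simps)
    have s14c: "\<sigma>w^4 \<le> \<sigma>14^3 \<and> \<sigma>w^4 \<le> \<sigma>14^2"
    proof (cases "\<sigma>w \<le> 1")
      case True
      have "\<sigma>w^4 \<le> \<sigma>w^3" "\<sigma>w^4 \<le> \<sigma>w^2" using True sig0 by (auto intro: power_decreasing)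
      moreover have "\<sigma>w^3 \<le> \<sigma>14^3" "\<sigma>w^2 \<le> \<sigma>14^2" unfolding \<sigma>14_def using sig0 by (auto intro: power_mono)
      ultimately show ?thesis by auto
    next
      case False
      then have g: "1 \<le> \<sigma>14" "\<sigma>w^4 \<le> \<sigma>14" unfolding \<sigma>14_def by auto
      have "\<sigma>14^1 \<le> \<sigma>14^3" by (rule power_increasing) (use g in auto)
      moreover have "\<sigma>14^1 \<le> \<sigma>14^2" by (rule power_increasing) (use g in auto)
      ultimately show ?thesis using g by auto
    qed
    have s14: "0 \<le> \<sigma>14" "\<sigma>w^4 \<le> \<sigma>14^3" "\<sigma>w^4 \<le> \<sigma>14^2"
      using s14c sig0 unfolding \<sigma>14_def by auto
    have uu: "m0.u = 1 / \<gamma>" by (simp add: m0.u_def)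
    have HL': "real H \<le> 3 * L * m0.u" using HL uu by simp
    have J0: "0 \<le> J" unfolding J_def using Dsq0 by simp
    have pb: "\<sigma>w^4 * m0.Lam / (C^3 * L^6) + J * \<sigma>w^4 / (2 * C^2 * real T * L^2) \<le> K0 * \<sigma>14 / C"
      by (rule prob_arith[OF _ s14 C0 K10 K1K0 True _ Lam0 L0 T0 J0])
        (use m0.I1[OF H1 L1 HL'] m0.I2[OF H1 L1 HL' LT] in \<open>auto simp: K1_def J_def\<close>)
    have probE: "1 - K0 * \<sigma>14 / C \<le> measure \<Omega> E" using pE pb e1 e2 by linarith
    have regE: "(\<Sum>t<T. Fsur A B K H c w (Mfull A B K H c w \<eta> (Mset H kB \<kappa> \<gamma>) Minit \<omega>) t \<omega>) - (\<Sum>t<T. fsur A B K H c w t M \<omega>)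
       \<le> (2 * sqrt 3 * Gc * C ^ 3 / sqrt \<gamma> + D^2 / 2) * sqrt (real T) * L ^ 3 + C / 2 * sqrt (real T) * L"
      if om: "\<omega> \<in> E" for \<omega>
    proof -
      interpret mw: main A B K H w \<omega> kB \<kappa> \<gamma> c Gc \<eta> Minit M by (rule mainI)
      have R: "(\<Sum>t<T. Fsur A B K H c w (Mfull A B K H c w \<eta> (Mset H kB \<kappa> \<gamma>) Minit \<omega>) t \<omega>) - (\<Sum>t<T. fsur A B K H c w t M \<omega>)
          \<le> m0.Dsq / (2 * \<eta>) + \<eta> * m0.Lam * Z \<omega> + m0.c1 * m0.Dm * (real (3*H+2) * Z2 \<omega> / (2 * \<nu>) + real (H + 1) * \<nu> / 2)"
        using mw.regret_Z[OF nu0, of T] unfolding Z_def Z2_def by simp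
      have DD: "m0.Dsq \<le> D^2"
      proof -
        have "m0.Dsq = 16 * kB^2 * \<kappa>^6 * real CARD('nx) / \<gamma>" by (simp add: m0.Dsq_def)
        also have "\<dots> \<le> 16 * kB^2 * \<kappa>^6 * real n / \<gamma>"
          using g0 unfolding n_def by (intro divide_right_mono mult_left_mono) auto
        also have "\<dots> \<le> 16 * kB^2 * \<kappa>^6 * real n / \<gamma>^2"
        proof (intro divide_left_mono)
          show "\<gamma>^2 \<le> \<gamma>" using g0 g1 by (simp add: power2_eq_square)
        qed (use g0 in auto)
        also have "\<dots> = D^2" unfolding D_def by (simp add: power_mult_distrib power_divide)
        finally show ?thesis .
      qed
      show ?thesis
        by (rule regret_arith[OF R, of a b])
          (use om Z0 Dsq0 Dm0 c10 Lam0 C0 T0 L0 DD A1 g0 g1 in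
            \<open>auto simp: E_def \<eta>_def a_def b_def \<nu>_def m0.Dm_def cost_assm_def\<close>)
    qed
    show ?thesis using Esets probE regE by blast
  qed
  show ?thesis unfolding Let_def L_def[symmetric] H_def[symmetric] \<eta>_def[symmetric] kB_def[symmetric]
      n_def[symmetric] D_def[symmetric] \<sigma>14_def[symmetric] QK
    using claim .
qed

end
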